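(* Let $k$ be a field, $A=k[\![x,y]\!]$, and $\mathfrak m=(x,y)$. Then $\Phi=\operatorname{Spec} A\setminus\{\mathfrak m\}$ is not a coherent subset of $\operatorname{Spec} A$.
   Context: $\operatorname{Ass} M$ is the set of associated primes of $M$. For $\Phi\subseteq\operatorname{Spec} A$, $\operatorname{Inj}_\Phi A$ is the full subcategory of injective $A$-modules $I$ with $\operatorname{Ass} I\subseteq\Phi$; $\Phi$ is coherent if every homomorphism $I^0\to I^1$ in $\operatorname{Inj}_\Phi A$ can be completed to an exact sequence $I^0\to I^1\to I^2$ with $I^2\in\operatorname{Inj}_\Phi A$. *)

theory Defs
  imports "HOL-Algebra.Module" "HOL-Algebra.Ideal"
begin

text \<open>A power series in x,y over k is its coefficient function nat \<times> nat \<Rightarrow> k;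
  (i,j) is the coefficient of x^i y^j.\<close>

definition PS2 :: "(nat \<times> nat \<Rightarrow> 'k::field) ring" where
  "PS2 = \<lparr> carrier = UNIV,
           monoid.mult = (\<lambda>f g (i, j). \<Sum>a\<le>i. \<Sum>b\<le>j. f (a, b) * g (i - a, j - b)),
           one = (\<lambda>(i, j). if i = 0 \<and> j = 0 then 1 else 0),
           zero = (\<lambda>_. 0),
           add = (\<lambda>f g p. f p + g p) \<rparr>"

definition PS2_X :: "nat \<times> nat \<Rightarrow> 'k::field" where
  "PS2_X = (\<lambda>p. if p = (1, 0) then 1 else 0)"

definition PS2_Y :: "nat \<times> nat \<Rightarrow> 'k::field" where
  "PS2_Y = (\<lambda>p. if p = (0, 1) then 1 else 0)"

definition PS2_max :: "(nat \<times> nat \<Rightarrow> 'k::field) set" where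
  "PS2_max = genideal PS2 {PS2_X, PS2_Y}"

definition Spec :: "('a, 'e) ring_scheme \<Rightarrow> 'a set set" where
  "Spec R = {P. primeideal P R}"

definition annihilator :: "('a, 'e) ring_scheme \<Rightarrow> ('a, 'b) module \<Rightarrow> 'b \<Rightarrow> 'a set" where
  "annihilator R M v = {a \<in> carrier R. a \<odot>\<^bsub>M\<^esub> v = \<zero>\<^bsub>M\<^esub>}"

definition Ass :: "('a, 'e) ring_scheme \<Rightarrow> ('a, 'b) module \<Rightarrow> 'a set set" where
  "Ass R M = {P \<in> Spec R. \<exists>v \<in> carrier M. P = annihilator R M v}"

definition module_hom :: "('a, 'e) ring_scheme \<Rightarrow> ('a, 'b) module \<Rightarrow> ('a, 'c) module \<Rightarrow> ('b \<Rightarrow> 'c) set" where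
  "module_hom R M N = {f. f \<in> carrier M \<rightarrow> carrier N
      \<and> (\<forall>x \<in> carrier M. \<forall>y \<in> carrier M. f (x \<oplus>\<^bsub>M\<^esub> y) = f x \<oplus>\<^bsub>N\<^esub> f y)
      \<and> (\<forall>a \<in> carrier R. \<forall>x \<in> carrier M. f (a \<odot>\<^bsub>M\<^esub> x) = a \<odot>\<^bsub>N\<^esub> f x)}"

text \<open>Injective module, via Baer's criterion: every R-linear map from an ideal J
  of R to M extends to R, i.e. is multiplication by some element of M.\<close>
definition injective_module :: "('a, 'e) ring_scheme \<Rightarrow> ('a, 'b) module \<Rightarrow> bool" where
  "injective_module R M \<longleftrightarrow> module R M \<and>
     (\<forall>J h. ideal J R \<and> h \<in> J \<rightarrow> carrier M
        \<and> (\<forall>x \<in> J. \<forall>y \<in> J. h (x \<oplus>\<^bsub>R\<^esub> y) = h x \<oplus>\<^bsub>M\<^esub> h y)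
        \<and> (\<forall>a \<in> carrier R. \<forall>x \<in> J. h (a \<otimes>\<^bsub>R\<^esub> x) = a \<odot>\<^bsub>M\<^esub> h x)
      \<longrightarrow> (\<exists>v \<in> carrier M. \<forall>x \<in> J. h x = x \<odot>\<^bsub>M\<^esub> v))"

definition Inj_Phi :: "('a, 'e) ring_scheme \<Rightarrow> 'a set set \<Rightarrow> ('a, 'b) module \<Rightarrow> bool" where
  "Inj_Phi R \<Phi> M \<longleftrightarrow> injective_module R M \<and> Ass R M \<subseteq> \<Phi>"

definition exact_at :: "('a, 'b) module \<Rightarrow> ('a, 'c) module \<Rightarrow> ('a, 'd) module
    \<Rightarrow> ('b \<Rightarrow> 'c) \<Rightarrow> ('c \<Rightarrow> 'd) \<Rightarrow> bool" where
  "exact_at M N P f g \<longleftrightarrow> f ` carrier M = {y \<in> carrier N. g y = \<zero>\<^bsub>P\<^esub>}"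

text \<open>Coherence of Phi, relative to the carrier types: I0, I1 range over modules
  whose elements live in type 'm, I2 over modules with elements in type 'c.
  Since HOL cannot quantify over types inside a formula, the genuine notion
  is obtained by letting these types vary.\<close>
definition coherent_on :: "'m itself \<Rightarrow> 'c itself \<Rightarrow> ('a, 'e) ring_scheme \<Rightarrow> 'a set set \<Rightarrow> bool" where
  "coherent_on _ _ R \<Phi> \<longleftrightarrow>
     (\<forall>(I0 :: ('a, 'm) module) (I1 :: ('a, 'm) module) f.
        Inj_Phi R \<Phi> I0 \<and> Inj_Phi R \<Phi> I1 \<and> f \<in> module_hom R I0 I1 \<longrightarrow>
        (\<exists>(I2 :: ('a, 'c) module) g. Inj_Phi R \<Phi> I2 \<and> g \<in> module_hom R I1 I2
            \<and> exact_at I0 I1 I2 f g))"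

end

theory Submission
  imports Defs "HOL-Computational_Algebra.Formal_Power_Series" "HOL-Computational_Algebra.Fraction_Field"
begin

type_synonym 'k ps = "nat \<times> nat \<Rightarrow> 'k"

definition toB :: "'k::field ps \<Rightarrow> 'k fps fps" where
  "toB a = Abs_fps (\<lambda>i. Abs_fps (\<lambda>j. a (i, j)))"

lemma toB_nth[simp]: "fps_nth (fps_nth (toB a) i) j = a (i, j)"
  by (simp add: toB_def)

lemma toB_inj: "toB a = toB b \<Longrightarrow> a = b"
proof
  fix p assume "toB a = toB b"
  then have "fps_nth (fps_nth (toB a) (fst p)) (snd p) = fps_nth (fps_nth (toB b) (fst p)) (snd p)" by simp
  then show "a p = b p" by simp
qed

lemma toB_surj: "toB (\<lambda>(i,j). fps_nth (fps_nth F i) j) = F"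
  by (simp add: fps_eq_iff)

lemma PS2_mult: "a \<otimes>\<^bsub>PS2\<^esub> b = (\<lambda>(i, j). \<Sum>a'\<le>i. \<Sum>b'\<le>j. a (a', b') * b (i - a', j - b'))"
  by (simp add: PS2_def)

lemma PS2_carrier[simp]: "carrier PS2 = UNIV"
  by (simp add: PS2_def)

lemma PS2_simps:
  "carrier PS2 = UNIV"
  "\<one>\<^bsub>PS2\<^esub> = (\<lambda>(i, j). if i = 0 \<and> j = 0 then 1 else 0)"
  "\<zero>\<^bsub>PS2\<^esub> = (\<lambda>_. 0)"
  "a \<oplus>\<^bsub>PS2\<^esub> b = (\<lambda>p. a p + b p)"
  by (simp_all add: PS2_def)

lemma toB_mult: "toB (a \<otimes>\<^bsub>PS2\<^esub> b) = toB a * toB b"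
  by (simp add: PS2_mult fps_eq_iff fps_mult_nth fps_sum_nth atLeast0AtMost)

lemma toB_add: "toB (a \<oplus>\<^bsub>PS2\<^esub> b) = toB a + toB b"
  by (simp add: fps_eq_iff PS2_simps)

lemma toB_one: "toB (\<one>\<^bsub>PS2\<^esub>) = 1"
  by (simp add: fps_eq_iff PS2_simps)

lemma toB_zero: "toB (\<zero>\<^bsub>PS2\<^esub>) = 0"
  by (simp add: fps_eq_iff PS2_simps)

lemma cring_PS2: "cring (PS2 :: 'k::field ps ring)"
proof (rule cringI)
  show "abelian_group (PS2 :: 'k ps ring)"
  proof (rule abelian_groupI)
    fix x :: "'k ps"
    show "\<exists>y\<in>carrier PS2. y \<oplus>\<^bsub>PS2\<^esub> x = \<zero>\<^bsub>PS2\<^esub>"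
      by (rule bexI[of _ "\<lambda>p. - x p"]) (auto simp: PS2_simps)
  qed (auto simp: algebra_simps PS2_simps)
  show "comm_monoid (PS2 :: 'k ps ring)"
  proof (rule comm_monoidI)
    fix x y z :: "'k ps"
    show "(x \<otimes>\<^bsub>PS2\<^esub> y) \<otimes>\<^bsub>PS2\<^esub> z = x \<otimes>\<^bsub>PS2\<^esub> (y \<otimes>\<^bsub>PS2\<^esub> z)"
      by (rule toB_inj) (simp only: toB_mult mult.assoc)
    show "\<one>\<^bsub>PS2\<^esub> \<otimes>\<^bsub>PS2\<^esub> x = x"
      by (rule toB_inj) (simp only: toB_mult toB_one mult_1_left)
    show "x \<otimes>\<^bsub>PS2\<^esub> y = y \<otimes>\<^bsub>PS2\<^esub> x"
      by (rule toB_inj) (simp only: toB_mult mult.commute)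
  qed auto
  fix x y z :: "'k ps"
  show "(x \<oplus>\<^bsub>PS2\<^esub> y) \<otimes>\<^bsub>PS2\<^esub> z = x \<otimes>\<^bsub>PS2\<^esub> z \<oplus>\<^bsub>PS2\<^esub> y \<otimes>\<^bsub>PS2\<^esub> z"
    by (rule toB_inj) (simp only: toB_mult toB_add distrib_right)
qed



section \<open>Vector space structure on the fraction field\<close>

type_synonym 'k K = "'k fps fps fract"

definition sc :: "'k::field \<Rightarrow> 'k K \<Rightarrow> 'k K" where
  "sc c q = Fraction_Field.Fract (fps_const (fps_const c)) 1 * q"

lemma Fract1_add: "Fraction_Field.Fract (a + b) 1 = Fraction_Field.Fract a 1 + Fraction_Field.Fract b 1"
  by (simp add: add_fract)

lemma vs_sc: "vector_space (sc :: 'k::field \<Rightarrow> 'k K \<Rightarrow> 'k K)"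
proof (unfold_locales, unfold sc_def)
  fix a b :: 'k and x y :: "'k K"
  show "Fraction_Field.Fract (fps_const (fps_const a)) 1 * (x + y) =
    Fraction_Field.Fract (fps_const (fps_const a)) 1 * x + Fraction_Field.Fract (fps_const (fps_const a)) 1 * y"
    by (simp add: distrib_left)
  show "Fraction_Field.Fract (fps_const (fps_const (a + b))) 1 * x =
    Fraction_Field.Fract (fps_const (fps_const a)) 1 * x + Fraction_Field.Fract (fps_const (fps_const b)) 1 * x"
    by (simp only: fps_const_add[symmetric] Fract1_add distrib_right)
  show "Fraction_Field.Fract (fps_const (fps_const a)) 1 * (Fraction_Field.Fract (fps_const (fps_const b)) 1 * x) =
    Fraction_Field.Fract (fps_const (fps_const (a * b))) 1 * x"
    by (simp only: fps_const_mult[symmetric] mult_fract mult.assoc[symmetric] mult_1_left)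
  show "Fraction_Field.Fract (fps_const (fps_const 1)) 1 * x = x"
    by (simp add: One_fract_def[symmetric])
qed

lemma vs_k: "vector_space ((*) :: 'k::field \<Rightarrow> 'k \<Rightarrow> 'k)"
  by unfold_locales (simp_all add: algebra_simps)

definition klin :: "'k::field K set \<Rightarrow> ('k K \<Rightarrow> 'k) \<Rightarrow> bool" where
  "klin W f \<longleftrightarrow> (\<forall>p\<in>W. \<forall>q\<in>W. f (p + q) = f p + f q) \<and> (\<forall>c. \<forall>p\<in>W. f (sc c p) = c * f p)"

lemma extend_functional:
  fixes W :: "'k::field K set" and f :: "'k K \<Rightarrow> 'k"
  assumes W0: "0 \<in> W" and Wadd: "\<And>p q. p \<in> W \<Longrightarrow> q \<in> W \<Longrightarrow> p + q \<in> W"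
    and Wsc: "\<And>c p. p \<in> W \<Longrightarrow> sc c p \<in> W"
    and f: "klin W f"
  shows "\<exists>g. klin UNIV g \<and> (\<forall>p\<in>W. g p = f p)"
proof -
  interpret V: vector_space "sc :: 'k \<Rightarrow> 'k K \<Rightarrow> 'k K" by (rule vs_sc)
  interpret P: vector_space_pair "sc :: 'k \<Rightarrow> 'k K \<Rightarrow> 'k K" "(*)"
    unfolding vector_space_pair_def using vs_sc vs_k by blast
  have sub: "V.subspace W" unfolding V.subspace_def using W0 Wadd Wsc by blast
  obtain B where B: "B \<subseteq> W" "V.independent B" "W \<subseteq> V.span B" "card B = V.dim W"
    by (rule V.basis_exists)
  obtain g where g: "Vector_Spaces.linear sc (*) g" "\<forall>x\<in>B. g x = f x"
    using P.linear_independent_extend[OF B(2), of f] by blast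
  have spanW: "V.span B \<subseteq> W" using V.span_minimal[OF B(1) sub] .
  have "x \<in> W \<and> g x = f x" if "x \<in> V.span B" for x
    using that
  proof (induction rule: V.span_induct_alt)
    case base
    have "g (0 + 0) = g 0 + g 0" using g(1) by (simp only: Vector_Spaces.linear_def module_hom_iff)
    then have "g 0 = 0" by (metis add.right_neutral add_left_cancel)
    moreover have "f 0 = 0"
    proof -
      have "f (0 + 0) = f 0 + f 0" using f W0 unfolding klin_def by blast
      then show ?thesis by (metis add.right_neutral add_left_cancel)
    qed
    ultimately show ?case using W0 by simp
  next
    case (step c x y)
    have xW: "x \<in> W" using step B(1) by blast
    have yW: "y \<in> W" using step(2) by blast
    have "g (sc c x + y) = c * g x + g y"
      using g(1) by (simp add: Vector_Spaces.linear_def module_hom_iff)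
    also have "\<dots> = c * f x + f y" using g(2) step by simp
    also have "\<dots> = f (sc c x + y)"
      using f xW yW Wsc[OF xW] unfolding klin_def by simp
    finally show ?case using Wadd[OF Wsc[OF xW] yW] by simp
  qed
  moreover have "klin UNIV g"
    using g(1) by (simp add: klin_def Vector_Spaces.linear_def module_hom_iff)
  ultimately show ?thesis using B(3) by blast
qed

section \<open>Duals of submodules of K\<close>

definition fromB :: "'k::field fps fps \<Rightarrow> 'k ps" where
  "fromB b = (\<lambda>(i, j). fps_nth (fps_nth b i) j)"

lemma toB_fromB[simp]: "toB (fromB b) = b"
  unfolding fromB_def by (rule toB_surj)

definition emb :: "'k::field ps \<Rightarrow> 'k K" where
  "emb a = Fraction_Field.Fract (toB a) 1"

definition cst :: "'k::field \<Rightarrow> 'k ps" where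
  "cst c = fromB (fps_const (fps_const c))"

lemma sc_emb: "sc c p = emb (cst c) * p"
  by (simp add: sc_def emb_def cst_def)

lemma emb_Fract: "emb a * Fraction_Field.Fract b s = Fraction_Field.Fract (toB a * b) s"
  by (simp add: emb_def mult_fract)

lemma emb_add: "emb (a \<oplus>\<^bsub>PS2\<^esub> b) = emb a + emb b"
  by (simp only: emb_def toB_add Fract1_add)

lemma emb_mult: "emb (a \<otimes>\<^bsub>PS2\<^esub> b) = emb a * emb b"
  by (simp add: emb_def toB_mult mult_fract)

lemma emb_one: "emb (\<one>\<^bsub>PS2\<^esub>) = 1"
  by (simp only: emb_def toB_one One_fract_def)

definition Dual :: "'k::field K set \<Rightarrow> ('k ps, 'k K \<Rightarrow> 'k) module" where
  "Dual F = \<lparr>carrier = {\<phi>. klin F \<phi> \<and> (\<forall>q. q \<notin> F \<longrightarrow> \<phi> q = 0)},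
     monoid.mult = (\<lambda>\<phi> \<psi> q. 0), one = (\<lambda>q. 0), zero = (\<lambda>q. 0),
     add = (\<lambda>\<phi> \<psi> q. \<phi> q + \<psi> q),
     smult = (\<lambda>a \<phi> q. if q \<in> F then \<phi> (emb a * q) else 0)\<rparr>"

lemma Dual_simps[simp]:
  "carrier (Dual F) = {\<phi>. klin F \<phi> \<and> (\<forall>q. q \<notin> F \<longrightarrow> \<phi> q = 0)}"
  "\<zero>\<^bsub>Dual F\<^esub> = (\<lambda>q. 0)"
  "\<phi> \<oplus>\<^bsub>Dual F\<^esub> \<psi> = (\<lambda>q. \<phi> q + \<psi> q)"
  "a \<odot>\<^bsub>Dual F\<^esub> \<phi> = (\<lambda>q. if q \<in> F then \<phi> (emb a * q) else 0)"
  by (simp_all add: Dual_def)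

definition Fsub :: "'k::field K set \<Rightarrow> bool" where
  "Fsub F \<longleftrightarrow> 0 \<in> F \<and> (\<forall>p\<in>F. \<forall>q\<in>F. p + q \<in> F) \<and> (\<forall>a. \<forall>p\<in>F. emb a * p \<in> F)"

lemma module_Dual:
  fixes F :: "'k::field K set"
  assumes F: "Fsub F"
  shows "Module.module PS2 (Dual F)"
proof -
  have F0: "0 \<in> F" and Fadd: "\<And>p q. p \<in> F \<Longrightarrow> q \<in> F \<Longrightarrow> p + q \<in> F"
    and Fmul: "\<And>a p. p \<in> F \<Longrightarrow> emb a * p \<in> F"
    using F unfolding Fsub_def by blast+
  have Fsc: "\<And>c p. p \<in> F \<Longrightarrow> sc c p \<in> F" using Fmul by (simp add: sc_emb)
  have ag: "abelian_group (Dual F)"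
  proof (rule abelian_groupI)
    fix x y
    assume x: "x \<in> carrier (Dual F)" and y: "y \<in> carrier (Dual F)"
    show "x \<oplus>\<^bsub>Dual F\<^esub> y \<in> carrier (Dual F)"
      using x y unfolding Dual_simps klin_def mem_Collect_eq by (simp add: add_ac distrib_left)
    show "x \<oplus>\<^bsub>Dual F\<^esub> y = y \<oplus>\<^bsub>Dual F\<^esub> x" unfolding Dual_simps by (simp add: add.commute)
  next
    fix x
    assume x: "x \<in> carrier (Dual F)"
    show "\<exists>y\<in>carrier (Dual F). y \<oplus>\<^bsub>Dual F\<^esub> x = \<zero>\<^bsub>Dual F\<^esub>"
      by (rule bexI[of _ "\<lambda>q. - x q"]) (use x in \<open>simp_all add: klin_def\<close>)
  next
    show "\<zero>\<^bsub>Dual F\<^esub> \<in> carrier (Dual F)" unfolding Dual_simps klin_def by simp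
  next
    fix x y z
    show "x \<oplus>\<^bsub>Dual F\<^esub> y \<oplus>\<^bsub>Dual F\<^esub> z = x \<oplus>\<^bsub>Dual F\<^esub> (y \<oplus>\<^bsub>Dual F\<^esub> z)"
      unfolding Dual_simps by (simp add: add.assoc)
  next
    fix x
    show "\<zero>\<^bsub>Dual F\<^esub> \<oplus>\<^bsub>Dual F\<^esub> x = x" unfolding Dual_simps by simp
  qed
  have ma: "module_axioms PS2 (Dual F)"
  proof
    fix a b :: "'k ps" and x y
    assume x: "x \<in> carrier (Dual F)" and y: "y \<in> carrier (Dual F)"
    show "a \<odot>\<^bsub>Dual F\<^esub> x \<in> carrier (Dual F)"
      unfolding Dual_simps mem_Collect_eq klin_def
    proof (intro conjI ballI allI impI)
      fix p q assume p: "p \<in> F" and q: "q \<in> F"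
      have "x (emb a * (p + q)) = x (emb a * p + emb a * q)" by (simp add: distrib_left)
      also have "\<dots> = x (emb a * p) + x (emb a * q)"
        using x Fmul[OF p] Fmul[OF q] unfolding Dual_simps klin_def by blast
      finally show "(if p + q \<in> F then x (emb a * (p + q)) else 0) =
          (if p \<in> F then x (emb a * p) else 0) + (if q \<in> F then x (emb a * q) else 0)"
        using p q Fadd by simp
    next
      fix c p assume p: "p \<in> F"
      have "x (emb a * sc c p) = x (sc c (emb a * p))" by (simp add: sc_def ac_simps)
      also have "\<dots> = c * x (emb a * p)"
        using x Fmul[OF p] unfolding Dual_simps klin_def by blast
      finally show "(if sc c p \<in> F then x (emb a * sc c p) else 0) = c * (if p \<in> F then x (emb a * p) else 0)"
        using p Fsc by simp
    qed simp
    show "(a \<oplus>\<^bsub>PS2\<^esub> b) \<odot>\<^bsub>Dual F\<^esub> x = a \<odot>\<^bsub>Dual F\<^esub> x \<oplus>\<^bsub>Dual F\<^esub> b \<odot>\<^bsub>Dual F\<^esub> x"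
    proof
      fix q
      show "((a \<oplus>\<^bsub>PS2\<^esub> b) \<odot>\<^bsub>Dual F\<^esub> x) q = (a \<odot>\<^bsub>Dual F\<^esub> x \<oplus>\<^bsub>Dual F\<^esub> b \<odot>\<^bsub>Dual F\<^esub> x) q"
      proof (cases "q \<in> F")
        case True
        have "x (emb (a \<oplus>\<^bsub>PS2\<^esub> b) * q) = x (emb a * q + emb b * q)"
          by (simp only: emb_add distrib_right)
        also have "\<dots> = x (emb a * q) + x (emb b * q)"
          using x Fmul[OF True] unfolding Dual_simps klin_def by blast
        finally show ?thesis using True by (simp only: Dual_simps if_True)
      qed (simp only: Dual_simps if_False, simp)
    qed
    show "a \<odot>\<^bsub>Dual F\<^esub> (x \<oplus>\<^bsub>Dual F\<^esub> y) = a \<odot>\<^bsub>Dual F\<^esub> x \<oplus>\<^bsub>Dual F\<^esub> a \<odot>\<^bsub>Dual F\<^esub> y"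
      unfolding Dual_simps by auto
    show "(a \<otimes>\<^bsub>PS2\<^esub> b) \<odot>\<^bsub>Dual F\<^esub> x = a \<odot>\<^bsub>Dual F\<^esub> (b \<odot>\<^bsub>Dual F\<^esub> x)"
      unfolding Dual_simps using Fmul by (auto simp: emb_mult ac_simps)
    show "\<one>\<^bsub>PS2\<^esub> \<odot>\<^bsub>Dual F\<^esub> x = x"
      using x unfolding Dual_simps by (auto simp: emb_one)
  qed
  show ?thesis
    by (rule Module.module.intro[OF cring_PS2 ag ma])
qed

definition Floc :: "'k::field fps fps \<Rightarrow> 'k K set" where
  "Floc t = {Fraction_Field.Fract b (t ^ n) | b n. True}"

lemma tpow_nz: "(t :: 'k::field fps fps) \<noteq> 0 \<Longrightarrow> t ^ n \<noteq> 0"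
  by simp

lemma Fract_add_pow:
  assumes "(t :: 'k::field fps fps) \<noteq> 0"
  shows "Fraction_Field.Fract b (t ^ n) + Fraction_Field.Fract b' (t ^ m) =
         Fraction_Field.Fract (b * t ^ m + b' * t ^ n) (t ^ (n + m))"
  using assms by (simp add: add_fract power_add)

lemma Fsub_Floc:
  assumes t: "(t :: 'k::field fps fps) \<noteq> 0"
  shows "Fsub (Floc t)"
  unfolding Fsub_def Floc_def
proof (intro conjI ballI allI)
  show "0 \<in> {Fraction_Field.Fract b (t ^ n) |b n. True}"
    by (rule CollectI, rule exI[of _ 0], rule exI[of _ 0]) (simp add: Zero_fract_def)
next
  fix p q assume "p \<in> {Fraction_Field.Fract b (t ^ n) |b n. True}" "q \<in> {Fraction_Field.Fract b (t ^ n) |b n. True}"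
  then obtain b n b' m where "p = Fraction_Field.Fract b (t ^ n)" "q = Fraction_Field.Fract b' (t ^ m)" by blast
  then show "p + q \<in> {Fraction_Field.Fract b (t ^ n) |b n. True}"
    using Fract_add_pow[OF t] by blast
next
  fix a p assume "p \<in> {Fraction_Field.Fract b (t ^ n) |b n. True}"
  then obtain b n where "p = Fraction_Field.Fract b (t ^ n)" by blast
  then show "emb a * p \<in> {Fraction_Field.Fract b (t ^ n) |b n. True}"
    by (auto simp: emb_Fract)
qed

lemma shift_Fract:
  assumes t: "(t :: 'k::field fps fps) \<noteq> 0"
  shows "emb (fromB (t ^ m)) * Fraction_Field.Fract 1 (t ^ (n + m)) = Fraction_Field.Fract 1 (t ^ n)"
  using t by (simp add: emb_Fract eq_fract power_add mult.commute)

lemma PS2_mult_comm: "a \<otimes>\<^bsub>PS2\<^esub> b = b \<otimes>\<^bsub>PS2\<^esub> a"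
  by (rule toB_inj) (simp only: toB_mult mult.commute)

lemma baer_Floc:
  fixes t :: "'k::field fps fps"
  assumes t: "t \<noteq> 0" and J: "ideal J PS2" and hJ: "h \<in> J \<rightarrow> carrier (Dual (Floc t))"
   and hadd: "\<forall>x\<in>J. \<forall>y\<in>J. h (x \<oplus>\<^bsub>PS2\<^esub> y) = h x \<oplus>\<^bsub>Dual (Floc t)\<^esub> h y"
   and hlin: "\<forall>a\<in>carrier PS2. \<forall>x\<in>J. h (a \<otimes>\<^bsub>PS2\<^esub> x) = a \<odot>\<^bsub>Dual (Floc t)\<^esub> h x"
  shows "\<exists>v\<in>carrier (Dual (Floc t)). \<forall>x\<in>J. h x = x \<odot>\<^bsub>Dual (Floc t)\<^esub> v"
proof -
  define F where "F = Floc t"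
  have FS: "Fsub F" unfolding F_def by (rule Fsub_Floc[OF t])
  have Fadd: "\<And>p q. p \<in> F \<Longrightarrow> q \<in> F \<Longrightarrow> p + q \<in> F"
    and Fmul: "\<And>a p. p \<in> F \<Longrightarrow> emb a * p \<in> F"
    using FS unfolding Fsub_def by blast+
  have Fsc: "\<And>c p. p \<in> F \<Longrightarrow> sc c p \<in> F" using Fmul by (simp add: sc_emb)
  have inF: "\<And>b n. Fraction_Field.Fract b (t ^ n) \<in> F" unfolding F_def Floc_def by blast
  have tn: "\<And>n. t ^ n \<noteq> 0" using t by simp
  have hcar: "\<And>j. j \<in> J \<Longrightarrow> klin F (h j) \<and> (\<forall>q. q \<notin> F \<longrightarrow> h j q = 0)"
    using hJ unfolding F_def by auto
  have h1: "\<And>u j q. j \<in> J \<Longrightarrow> q \<in> F \<Longrightarrow> h (u \<otimes>\<^bsub>PS2\<^esub> j) q = h j (emb u * q)"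
    using hlin unfolding F_def by simp
  have Jm: "\<And>u j. j \<in> J \<Longrightarrow> u \<otimes>\<^bsub>PS2\<^esub> j \<in> J"
    using ideal.I_l_closed[OF J] by simp
  have Ja: "\<And>j j'. j \<in> J \<Longrightarrow> j' \<in> J \<Longrightarrow> j \<oplus>\<^bsub>PS2\<^esub> j' \<in> J"
    using additive_subgroup.a_closed[OF ideal.axioms(1)[OF J]] by blast
  have J0: "\<zero>\<^bsub>PS2\<^esub> \<in> J"
    using additive_subgroup.zero_closed[OF ideal.axioms(1)[OF J]] by blast
  have h2: "h j (Fraction_Field.Fract 1 (t ^ n)) = h j' (Fraction_Field.Fract 1 (t ^ m))"
    if j: "j \<in> J" "j' \<in> J" and e: "toB j * t ^ m = toB j' * t ^ n" for j j' n m
  proof -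
    have "h j (Fraction_Field.Fract 1 (t ^ n)) = h (fromB (t ^ m) \<otimes>\<^bsub>PS2\<^esub> j) (Fraction_Field.Fract 1 (t ^ (n + m)))"
      using h1[OF j(1) inF] shift_Fract[OF t] by simp
    also have "fromB (t ^ m) \<otimes>\<^bsub>PS2\<^esub> j = fromB (t ^ n) \<otimes>\<^bsub>PS2\<^esub> j'"
      by (rule toB_inj) (simp add: toB_mult e mult.commute)
    also have "h (fromB (t ^ n) \<otimes>\<^bsub>PS2\<^esub> j') (Fraction_Field.Fract 1 (t ^ (n + m))) = h j' (Fraction_Field.Fract 1 (t ^ m))"
      using h1[OF j(2) inF] shift_Fract[OF t, of n m] by (simp add: add.commute)
    finally show ?thesis .
  qed
  define W where "W = {Fraction_Field.Fract (toB j) (t ^ n) | j n. j \<in> J}"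
  define v0 where "v0 q = (let p = SOME p. fst p \<in> J \<and> q = Fraction_Field.Fract (toB (fst p)) (t ^ (snd p))
                           in h (fst p) (Fraction_Field.Fract 1 (t ^ (snd p))))" for q
  have v0: "v0 (Fraction_Field.Fract (toB j) (t ^ n)) = h j (Fraction_Field.Fract 1 (t ^ n))" if j: "j \<in> J" for j n
  proof -
    define P where "P p \<longleftrightarrow> fst p \<in> J \<and> Fraction_Field.Fract (toB j) (t ^ n) = Fraction_Field.Fract (toB (fst p)) (t ^ (snd p))" for p
    have "P (j, n)" using j unfolding P_def by simp
    then have sP: "P (SOME p. P p)" by (rule someI)
    define p where "p = (SOME p. P p)"
    have "P p" unfolding p_def by (rule sP)
    then have p: "fst p \<in> J" "toB j * t ^ snd p = toB (fst p) * t ^ n"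
      using tn unfolding P_def by (auto simp: eq_fract)
    have "v0 (Fraction_Field.Fract (toB j) (t ^ n)) = h (fst p) (Fraction_Field.Fract 1 (t ^ (snd p)))"
      unfolding v0_def p_def P_def Let_def by simp
    also have "\<dots> = h j (Fraction_Field.Fract 1 (t ^ n))"
      using h2[OF j p(1) p(2)] by simp
    finally show ?thesis .
  qed
  have W0: "0 \<in> W"
  proof -
    have "0 = Fraction_Field.Fract (toB \<zero>\<^bsub>PS2\<^esub>) (t ^ 0)" by (simp add: toB_zero Zero_fract_def)
    then show ?thesis unfolding W_def using J0 by blast
  qed
  have sumrep: "Fraction_Field.Fract (toB j) (t ^ n) + Fraction_Field.Fract (toB j') (t ^ m) =
     Fraction_Field.Fract (toB ((fromB (t ^ m) \<otimes>\<^bsub>PS2\<^esub> j) \<oplus>\<^bsub>PS2\<^esub> (fromB (t ^ n) \<otimes>\<^bsub>PS2\<^esub> j'))) (t ^ (n + m))" for j j' n m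
    using Fract_add_pow[OF t] by (simp add: toB_add toB_mult mult.commute)
  have screp: "sc c (Fraction_Field.Fract (toB j) (t ^ n)) = Fraction_Field.Fract (toB (cst c \<otimes>\<^bsub>PS2\<^esub> j)) (t ^ n)" for c j n
    by (simp add: sc_emb emb_Fract toB_mult)
  have Wadd: "p + q \<in> W" if pqW: "p \<in> W" "q \<in> W" for p q
  proof -
    obtain j n j' m where "j \<in> J" "j' \<in> J" "p = Fraction_Field.Fract (toB j) (t ^ n)" "q = Fraction_Field.Fract (toB j') (t ^ m)"
      using pqW unfolding W_def by blast
    then show ?thesis unfolding W_def using sumrep Ja Jm by blast
  qed
  have Wsc: "sc c p \<in> W" if pW: "p \<in> W" for c p
  proof -
    obtain j n where "j \<in> J" "p = Fraction_Field.Fract (toB j) (t ^ n)" using pW unfolding W_def by blast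
    then show ?thesis unfolding W_def using screp Jm by blast
  qed
  have klv0: "klin W v0"
    unfolding klin_def
  proof (intro conjI ballI allI)
    fix p q assume "p \<in> W" "q \<in> W"
    then obtain j n j' m where jj: "j \<in> J" "j' \<in> J" and pq: "p = Fraction_Field.Fract (toB j) (t ^ n)" "q = Fraction_Field.Fract (toB j') (t ^ m)"
      unfolding W_def by blast
    have "v0 (p + q) = h ((fromB (t ^ m) \<otimes>\<^bsub>PS2\<^esub> j) \<oplus>\<^bsub>PS2\<^esub> (fromB (t ^ n) \<otimes>\<^bsub>PS2\<^esub> j')) (Fraction_Field.Fract 1 (t ^ (n + m)))"
      unfolding pq sumrep using v0 Ja Jm jj by blast
    also have "\<dots> = h (fromB (t ^ m) \<otimes>\<^bsub>PS2\<^esub> j) (Fraction_Field.Fract 1 (t ^ (n + m))) + h (fromB (t ^ n) \<otimes>\<^bsub>PS2\<^esub> j') (Fraction_Field.Fract 1 (t ^ (n + m)))"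
      using hadd Jm jj by simp
    also have "\<dots> = h j (Fraction_Field.Fract 1 (t ^ n)) + h j' (Fraction_Field.Fract 1 (t ^ m))"
      using h1[OF jj(1) inF] h1[OF jj(2) inF] shift_Fract[OF t, of m n] shift_Fract[OF t, of n m]
      by (simp add: add.commute)
    also have "\<dots> = v0 p + v0 q" using v0 jj pq by simp
    finally show "v0 (p + q) = v0 p + v0 q" .
  next
    fix c p assume "p \<in> W"
    then obtain j n where jj: "j \<in> J" and pq: "p = Fraction_Field.Fract (toB j) (t ^ n)"
      unfolding W_def by blast
    have "v0 (sc c p) = h (cst c \<otimes>\<^bsub>PS2\<^esub> j) (Fraction_Field.Fract 1 (t ^ n))"
      unfolding pq screp using v0 Jm jj by blast
    also have "\<dots> = h j (sc c (Fraction_Field.Fract 1 (t ^ n)))"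
      using h1[OF jj inF] by (simp add: sc_emb)
    also have "\<dots> = c * h j (Fraction_Field.Fract 1 (t ^ n))"
      using hcar[OF jj] inF unfolding klin_def by blast
    also have "\<dots> = c * v0 p" using v0 jj pq by simp
    finally show "v0 (sc c p) = c * v0 p" .
  qed
  obtain g where g: "klin UNIV g" "\<forall>p\<in>W. g p = v0 p"
    using extend_functional[OF W0 Wadd Wsc klv0] by blast
  define v where "v = (\<lambda>q. if q \<in> F then g q else 0)"
  have vcar: "v \<in> carrier (Dual F)"
    using g(1) Fadd Fsc unfolding v_def Dual_simps klin_def by auto
  have "h x = x \<odot>\<^bsub>Dual F\<^esub> v" if x: "x \<in> J" for x
  proof
    fix q
    show "h x q = (x \<odot>\<^bsub>Dual F\<^esub> v) q"
    proof (cases "q \<in> F")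
      case True
      then obtain b n where q: "q = Fraction_Field.Fract b (t ^ n)" unfolding F_def Floc_def by blast
      define a where "a = fromB b"
      have qa: "q = Fraction_Field.Fract (toB a) (t ^ n)" unfolding a_def q by simp
      have xa: "x \<otimes>\<^bsub>PS2\<^esub> a \<in> J" using ideal.I_r_closed[OF J x] by simp
      have "(x \<odot>\<^bsub>Dual F\<^esub> v) q = g (emb x * q)"
        using True Fmul[OF True] unfolding v_def by simp
      also have "emb x * q = Fraction_Field.Fract (toB (x \<otimes>\<^bsub>PS2\<^esub> a)) (t ^ n)"
        unfolding qa by (simp add: emb_Fract toB_mult)
      also have "g \<dots> = v0 \<dots>" using g(2) xa unfolding W_def by blast
      also have "\<dots> = h (x \<otimes>\<^bsub>PS2\<^esub> a) (Fraction_Field.Fract 1 (t ^ n))" using v0 xa by blast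
      also have "\<dots> = h x (emb a * Fraction_Field.Fract 1 (t ^ n))"
        using h1[OF x inF] by (simp add: PS2_mult_comm)
      also have "emb a * Fraction_Field.Fract 1 (t ^ n) = q" unfolding qa by (simp add: emb_Fract)
      finally show ?thesis by simp
    next
      case False
      then show ?thesis using hcar[OF x] by simp
    qed
  qed
  then show ?thesis using vcar unfolding F_def by blast
qed

lemma inj_Dual:
  fixes t :: "'k::field fps fps"
  assumes t: "t \<noteq> 0"
  shows "injective_module PS2 (Dual (Floc t))"
  unfolding injective_module_def
  using module_Dual[OF Fsub_Floc[OF t]] baer_Floc[OF t] by blast



definition prodM :: "('a, 'e) ring_scheme \<Rightarrow> ('a, 'b) module \<Rightarrow> ('a, 'c) module \<Rightarrow> ('a, 'b \<times> 'c) module" where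
  "prodM R M N = \<lparr>carrier = carrier M \<times> carrier N, monoid.mult = (\<lambda>x y. x), one = (\<one>\<^bsub>M\<^esub>, \<one>\<^bsub>N\<^esub>),
     zero = (\<zero>\<^bsub>M\<^esub>, \<zero>\<^bsub>N\<^esub>), add = (\<lambda>x y. (fst x \<oplus>\<^bsub>M\<^esub> fst y, snd x \<oplus>\<^bsub>N\<^esub> snd y)),
     smult = (\<lambda>a x. (a \<odot>\<^bsub>M\<^esub> fst x, a \<odot>\<^bsub>N\<^esub> snd x))\<rparr>"

lemma prodM_simps[simp]:
  "carrier (prodM R M N) = carrier M \<times> carrier N"
  "\<zero>\<^bsub>prodM R M N\<^esub> = (\<zero>\<^bsub>M\<^esub>, \<zero>\<^bsub>N\<^esub>)"
  "x \<oplus>\<^bsub>prodM R M N\<^esub> y = (fst x \<oplus>\<^bsub>M\<^esub> fst y, snd x \<oplus>\<^bsub>N\<^esub> snd y)"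
  "a \<odot>\<^bsub>prodM R M N\<^esub> x = (a \<odot>\<^bsub>M\<^esub> fst x, a \<odot>\<^bsub>N\<^esub> snd x)"
  by (simp_all add: prodM_def)

lemma module_prodM:
  assumes M: "Module.module R M" and N: "Module.module R N"
  shows "Module.module R (prodM R M N)"
proof -
  interpret M: Module.module R M by (rule M)
  interpret N: Module.module R N by (rule N)
  have ag: "abelian_group (prodM R M N)"
  proof (rule abelian_groupI)
    fix x y assume "x \<in> carrier (prodM R M N)" "y \<in> carrier (prodM R M N)"
    then show "x \<oplus>\<^bsub>prodM R M N\<^esub> y \<in> carrier (prodM R M N)"
      by (simp add: mem_Times_iff)
  next
    show "\<zero>\<^bsub>prodM R M N\<^esub> \<in> carrier (prodM R M N)" by simp
  next
    fix x y z assume "x \<in> carrier (prodM R M N)" "y \<in> carrier (prodM R M N)" "z \<in> carrier (prodM R M N)"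
    then show "x \<oplus>\<^bsub>prodM R M N\<^esub> y \<oplus>\<^bsub>prodM R M N\<^esub> z = x \<oplus>\<^bsub>prodM R M N\<^esub> (y \<oplus>\<^bsub>prodM R M N\<^esub> z)"
      by (simp add: mem_Times_iff M.a_assoc N.a_assoc)
  next
    fix x y assume "x \<in> carrier (prodM R M N)" "y \<in> carrier (prodM R M N)"
    then show "x \<oplus>\<^bsub>prodM R M N\<^esub> y = y \<oplus>\<^bsub>prodM R M N\<^esub> x"
      by (simp add: mem_Times_iff M.a_comm N.a_comm)
  next
    fix x assume "x \<in> carrier (prodM R M N)"
    then show "\<zero>\<^bsub>prodM R M N\<^esub> \<oplus>\<^bsub>prodM R M N\<^esub> x = x"
      by (simp add: mem_Times_iff)
  next
    fix x assume x: "x \<in> carrier (prodM R M N)"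
    show "\<exists>y\<in>carrier (prodM R M N). y \<oplus>\<^bsub>prodM R M N\<^esub> x = \<zero>\<^bsub>prodM R M N\<^esub>"
      by (rule bexI[of _ "(\<ominus>\<^bsub>M\<^esub> fst x, \<ominus>\<^bsub>N\<^esub> snd x)"]) (use x in \<open>simp_all add: mem_Times_iff M.l_neg N.l_neg\<close>)
  qed
  have ma: "module_axioms R (prodM R M N)"
  proof
    fix a x assume "a \<in> carrier R" "x \<in> carrier (prodM R M N)"
    then show "a \<odot>\<^bsub>prodM R M N\<^esub> x \<in> carrier (prodM R M N)" by (simp add: mem_Times_iff)
  next
    fix a b x assume "a \<in> carrier R" "b \<in> carrier R" "x \<in> carrier (prodM R M N)"
    then show "(a \<oplus>\<^bsub>R\<^esub> b) \<odot>\<^bsub>prodM R M N\<^esub> x = a \<odot>\<^bsub>prodM R M N\<^esub> x \<oplus>\<^bsub>prodM R M N\<^esub> b \<odot>\<^bsub>prodM R M N\<^esub> x"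
      by (simp add: mem_Times_iff M.smult_l_distr N.smult_l_distr)
  next
    fix a x y assume "a \<in> carrier R" "x \<in> carrier (prodM R M N)" "y \<in> carrier (prodM R M N)"
    then show "a \<odot>\<^bsub>prodM R M N\<^esub> (x \<oplus>\<^bsub>prodM R M N\<^esub> y) = a \<odot>\<^bsub>prodM R M N\<^esub> x \<oplus>\<^bsub>prodM R M N\<^esub> a \<odot>\<^bsub>prodM R M N\<^esub> y"
      by (simp add: mem_Times_iff M.smult_r_distr N.smult_r_distr)
  next
    fix a b x assume "a \<in> carrier R" "b \<in> carrier R" "x \<in> carrier (prodM R M N)"
    then show "(a \<otimes>\<^bsub>R\<^esub> b) \<odot>\<^bsub>prodM R M N\<^esub> x = a \<odot>\<^bsub>prodM R M N\<^esub> (b \<odot>\<^bsub>prodM R M N\<^esub> x)"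
      by (simp add: mem_Times_iff M.smult_assoc1 N.smult_assoc1)
  next
    fix x assume "x \<in> carrier (prodM R M N)"
    then show "\<one>\<^bsub>R\<^esub> \<odot>\<^bsub>prodM R M N\<^esub> x = x" by (simp add: mem_Times_iff)
  qed
  show ?thesis by (rule Module.module.intro[OF M.is_cring ag ma])
qed

lemma injective_moduleD:
  assumes "injective_module R M" "ideal J R" "h \<in> J \<rightarrow> carrier M"
    "\<forall>x\<in>J. \<forall>y\<in>J. h (x \<oplus>\<^bsub>R\<^esub> y) = h x \<oplus>\<^bsub>M\<^esub> h y"
    "\<forall>a\<in>carrier R. \<forall>x\<in>J. h (a \<otimes>\<^bsub>R\<^esub> x) = a \<odot>\<^bsub>M\<^esub> h x"
  shows "\<exists>v\<in>carrier M. \<forall>x\<in>J. h x = x \<odot>\<^bsub>M\<^esub> v"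
proof -
  have "\<forall>J h. ideal J R \<and> h \<in> J \<rightarrow> carrier M
        \<and> (\<forall>x \<in> J. \<forall>y \<in> J. h (x \<oplus>\<^bsub>R\<^esub> y) = h x \<oplus>\<^bsub>M\<^esub> h y)
        \<and> (\<forall>a \<in> carrier R. \<forall>x \<in> J. h (a \<otimes>\<^bsub>R\<^esub> x) = a \<odot>\<^bsub>M\<^esub> h x)
      \<longrightarrow> (\<exists>v \<in> carrier M. \<forall>x \<in> J. h x = x \<odot>\<^bsub>M\<^esub> v)"
    using assms(1) unfolding injective_module_def by (rule conjunct2)
  then have "ideal J R \<and> h \<in> J \<rightarrow> carrier M
        \<and> (\<forall>x \<in> J. \<forall>y \<in> J. h (x \<oplus>\<^bsub>R\<^esub> y) = h x \<oplus>\<^bsub>M\<^esub> h y)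
        \<and> (\<forall>a \<in> carrier R. \<forall>x \<in> J. h (a \<otimes>\<^bsub>R\<^esub> x) = a \<odot>\<^bsub>M\<^esub> h x)
      \<longrightarrow> (\<exists>v \<in> carrier M. \<forall>x \<in> J. h x = x \<odot>\<^bsub>M\<^esub> v)"
    by (rule spec[of _ h, OF spec[of _ J]])
  moreover have "ideal J R \<and> h \<in> J \<rightarrow> carrier M
        \<and> (\<forall>x \<in> J. \<forall>y \<in> J. h (x \<oplus>\<^bsub>R\<^esub> y) = h x \<oplus>\<^bsub>M\<^esub> h y)
        \<and> (\<forall>a \<in> carrier R. \<forall>x \<in> J. h (a \<otimes>\<^bsub>R\<^esub> x) = a \<odot>\<^bsub>M\<^esub> h x)"
    using assms(2-5) by (intro conjI)
  ultimately show ?thesis by (rule mp)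
qed

lemma inj_prodM:
  assumes M: "injective_module R M" and N: "injective_module R N"
  shows "injective_module R (prodM R M N)"
  unfolding injective_module_def
proof (intro conjI allI impI)
  show "Module.module R (prodM R M N)"
    using M N module_prodM unfolding injective_module_def by (elim conjE) blast
  fix J h
  assume A: "ideal J R \<and> h \<in> J \<rightarrow> carrier (prodM R M N) \<and>
       (\<forall>x\<in>J. \<forall>y\<in>J. h (x \<oplus>\<^bsub>R\<^esub> y) = h x \<oplus>\<^bsub>prodM R M N\<^esub> h y) \<and>
       (\<forall>a\<in>carrier R. \<forall>x\<in>J. h (a \<otimes>\<^bsub>R\<^esub> x) = a \<odot>\<^bsub>prodM R M N\<^esub> h x)"
  have "ideal J R \<and> (\<lambda>x. fst (h x)) \<in> J \<rightarrow> carrier M \<and>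
       (\<forall>x\<in>J. \<forall>y\<in>J. fst (h (x \<oplus>\<^bsub>R\<^esub> y)) = fst (h x) \<oplus>\<^bsub>M\<^esub> fst (h y)) \<and>
       (\<forall>a\<in>carrier R. \<forall>x\<in>J. fst (h (a \<otimes>\<^bsub>R\<^esub> x)) = a \<odot>\<^bsub>M\<^esub> fst (h x))"
    using A by (auto simp: Pi_def)
  then obtain v1 where v1: "v1 \<in> carrier M" "\<forall>x\<in>J. fst (h x) = x \<odot>\<^bsub>M\<^esub> v1"
    using injective_moduleD[OF M] by blast
  have "ideal J R \<and> (\<lambda>x. snd (h x)) \<in> J \<rightarrow> carrier N \<and>
       (\<forall>x\<in>J. \<forall>y\<in>J. snd (h (x \<oplus>\<^bsub>R\<^esub> y)) = snd (h x) \<oplus>\<^bsub>N\<^esub> snd (h y)) \<and>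
       (\<forall>a\<in>carrier R. \<forall>x\<in>J. snd (h (a \<otimes>\<^bsub>R\<^esub> x)) = a \<odot>\<^bsub>N\<^esub> snd (h x))"
    using A by (auto simp: Pi_def)
  then obtain v2 where v2: "v2 \<in> carrier N" "\<forall>x\<in>J. snd (h x) = x \<odot>\<^bsub>N\<^esub> v2"
    using injective_moduleD[OF N] by blast
  show "\<exists>v\<in>carrier (prodM R M N). \<forall>x\<in>J. h x = x \<odot>\<^bsub>prodM R M N\<^esub> v"
    by (rule bexI[of _ "(v1, v2)"]) (use v1 v2 in \<open>auto simp: prod_eq_iff\<close>)
qed

section \<open>Transport along an injection\<close>

definition transport :: "('b \<Rightarrow> 'c) \<Rightarrow> ('a, 'b) module \<Rightarrow> ('a, 'c) module" where
  "transport e M = \<lparr>carrier = e ` carrier M, monoid.mult = (\<lambda>x y. x), one = e \<one>\<^bsub>M\<^esub>,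
     zero = e \<zero>\<^bsub>M\<^esub>,
     add = (\<lambda>x y. e (inv_into (carrier M) e x \<oplus>\<^bsub>M\<^esub> inv_into (carrier M) e y)),
     smult = (\<lambda>a x. e (a \<odot>\<^bsub>M\<^esub> inv_into (carrier M) e x))\<rparr>"

lemma tr_carrier[simp]: "carrier (transport e M) = e ` carrier M"
  by (simp add: transport_def)

lemma tr_zero[simp]: "\<zero>\<^bsub>transport e M\<^esub> = e \<zero>\<^bsub>M\<^esub>"
  by (simp add: transport_def)

lemma tr_add[simp]:
  "inj_on e (carrier M) \<Longrightarrow> x \<in> carrier M \<Longrightarrow> y \<in> carrier M \<Longrightarrow>
   e x \<oplus>\<^bsub>transport e M\<^esub> e y = e (x \<oplus>\<^bsub>M\<^esub> y)"
  by (simp add: transport_def)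

lemma tr_smult[simp]:
  "inj_on e (carrier M) \<Longrightarrow> x \<in> carrier M \<Longrightarrow> a \<odot>\<^bsub>transport e M\<^esub> e x = e (a \<odot>\<^bsub>M\<^esub> x)"
  by (simp add: transport_def)

lemma module_tr:
  assumes M: "Module.module R M" and e: "inj_on e (carrier M)"
  shows "Module.module R (transport e M)"
proof -
  interpret M: Module.module R M by (rule M)
  have ag: "abelian_group (transport e M)"
  proof (rule abelian_groupI)
    fix x y assume "x \<in> carrier (transport e M)" "y \<in> carrier (transport e M)"
    then obtain x' y' where "x' \<in> carrier M" "y' \<in> carrier M" "x = e x'" "y = e y'" by auto
    then show "x \<oplus>\<^bsub>transport e M\<^esub> y \<in> carrier (transport e M)"
      using e by auto
  next
    show "\<zero>\<^bsub>transport e M\<^esub> \<in> carrier (transport e M)" by simp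
  next
    fix x y z assume "x \<in> carrier (transport e M)" "y \<in> carrier (transport e M)" "z \<in> carrier (transport e M)"
    then obtain x' y' z' where "x' \<in> carrier M" "y' \<in> carrier M" "z' \<in> carrier M" "x = e x'" "y = e y'" "z = e z'" by auto
    then show "x \<oplus>\<^bsub>transport e M\<^esub> y \<oplus>\<^bsub>transport e M\<^esub> z = x \<oplus>\<^bsub>transport e M\<^esub> (y \<oplus>\<^bsub>transport e M\<^esub> z)"
      using e by (simp add: M.a_assoc)
  next
    fix x y assume "x \<in> carrier (transport e M)" "y \<in> carrier (transport e M)"
    then obtain x' y' where "x' \<in> carrier M" "y' \<in> carrier M" "x = e x'" "y = e y'" by auto
    then show "x \<oplus>\<^bsub>transport e M\<^esub> y = y \<oplus>\<^bsub>transport e M\<^esub> x"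
      using e by (simp add: M.a_comm)
  next
    fix x assume "x \<in> carrier (transport e M)"
    then obtain x' where x': "x' \<in> carrier M" "x = e x'" by auto
    then show "\<zero>\<^bsub>transport e M\<^esub> \<oplus>\<^bsub>transport e M\<^esub> x = x" using e by simp
  next
    fix x assume "x \<in> carrier (transport e M)"
    then obtain x' where x': "x' \<in> carrier M" "x = e x'" by auto
    show "\<exists>y\<in>carrier (transport e M). y \<oplus>\<^bsub>transport e M\<^esub> x = \<zero>\<^bsub>transport e M\<^esub>"
      by (rule bexI[of _ "e (\<ominus>\<^bsub>M\<^esub> x')"]) (use x' e in \<open>auto simp: M.l_neg\<close>)
  qed
  have ma: "module_axioms R (transport e M)"
  proof
    fix a x assume a: "a \<in> carrier R" and "x \<in> carrier (transport e M)"
    then obtain x' where xy: "x' \<in> carrier M" "x = e x'" by auto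
    show "a \<odot>\<^bsub>transport e M\<^esub> x \<in> carrier (transport e M)" using xy e a by simp
  next
    fix a b x assume a: "a \<in> carrier R" and b: "b \<in> carrier R" and "x \<in> carrier (transport e M)"
    then obtain x' where xy: "x' \<in> carrier M" "x = e x'" by auto
    show "(a \<oplus>\<^bsub>R\<^esub> b) \<odot>\<^bsub>transport e M\<^esub> x = a \<odot>\<^bsub>transport e M\<^esub> x \<oplus>\<^bsub>transport e M\<^esub> b \<odot>\<^bsub>transport e M\<^esub> x"
      using xy e a b by (simp add: M.smult_l_distr)
  next
    fix a x y assume a: "a \<in> carrier R" and "x \<in> carrier (transport e M)" "y \<in> carrier (transport e M)"
    then obtain x' y' where xy: "x' \<in> carrier M" "y' \<in> carrier M" "x = e x'" "y = e y'" by auto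
    show "a \<odot>\<^bsub>transport e M\<^esub> (x \<oplus>\<^bsub>transport e M\<^esub> y) = a \<odot>\<^bsub>transport e M\<^esub> x \<oplus>\<^bsub>transport e M\<^esub> a \<odot>\<^bsub>transport e M\<^esub> y"
      using xy e a by (simp add: M.smult_r_distr)
  next
    fix a b x assume a: "a \<in> carrier R" and b: "b \<in> carrier R" and "x \<in> carrier (transport e M)"
    then obtain x' where xy: "x' \<in> carrier M" "x = e x'" by auto
    show "(a \<otimes>\<^bsub>R\<^esub> b) \<odot>\<^bsub>transport e M\<^esub> x = a \<odot>\<^bsub>transport e M\<^esub> (b \<odot>\<^bsub>transport e M\<^esub> x)"
      using xy e a b by (simp add: M.smult_assoc1)
  next
    fix x assume "x \<in> carrier (transport e M)"
    then obtain x' where xy: "x' \<in> carrier M" "x = e x'" by auto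
    show "\<one>\<^bsub>R\<^esub> \<odot>\<^bsub>transport e M\<^esub> x = x" using xy e by simp
  qed
  show ?thesis by (rule Module.module.intro[OF M.is_cring ag ma])
qed

lemma inj_tr:
  assumes M: "injective_module R M" and e: "inj_on e (carrier M)"
  shows "injective_module R (transport e M)"
  unfolding injective_module_def
proof (intro conjI allI impI)
  have Mm: "Module.module R M" using M unfolding injective_module_def by (rule conjunct1)
  then show "Module.module R (transport e M)" using module_tr e by blast
  interpret M: Module.module R M by (rule Mm)
  fix J h
  assume A: "ideal J R \<and> h \<in> J \<rightarrow> carrier (transport e M) \<and>
       (\<forall>x\<in>J. \<forall>y\<in>J. h (x \<oplus>\<^bsub>R\<^esub> y) = h x \<oplus>\<^bsub>transport e M\<^esub> h y) \<and>
       (\<forall>a\<in>carrier R. \<forall>x\<in>J. h (a \<otimes>\<^bsub>R\<^esub> x) = a \<odot>\<^bsub>transport e M\<^esub> h x)"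
  define d where "d = inv_into (carrier M) e"
  have dh: "\<And>x. x \<in> J \<Longrightarrow> d (h x) \<in> carrier M \<and> e (d (h x)) = h x"
    using A unfolding d_def by (auto simp: Pi_def inv_into_into f_inv_into_f)
  have de: "\<And>x. x \<in> carrier M \<Longrightarrow> d (e x) = x" unfolding d_def using e by simp
  have Jc: "J \<subseteq> carrier R" using A ideal.axioms(1) additive_subgroup.a_subset by blast
  have "ideal J R \<and> (\<lambda>x. d (h x)) \<in> J \<rightarrow> carrier M \<and>
       (\<forall>x\<in>J. \<forall>y\<in>J. d (h (x \<oplus>\<^bsub>R\<^esub> y)) = d (h x) \<oplus>\<^bsub>M\<^esub> d (h y)) \<and>
       (\<forall>a\<in>carrier R. \<forall>x\<in>J. d (h (a \<otimes>\<^bsub>R\<^esub> x)) = a \<odot>\<^bsub>M\<^esub> d (h x))"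
  proof (intro conjI ballI)
    show "ideal J R" using A by blast
    show "(\<lambda>x. d (h x)) \<in> J \<rightarrow> carrier M" using dh by auto
  next
    fix x y assume xy: "x \<in> J" "y \<in> J"
    have "h (x \<oplus>\<^bsub>R\<^esub> y) = e (d (h x)) \<oplus>\<^bsub>transport e M\<^esub> e (d (h y))" using A xy dh by simp
    also have "\<dots> = e (d (h x) \<oplus>\<^bsub>M\<^esub> d (h y))" by (rule tr_add[OF e]) (use dh xy in auto)
    finally show "d (h (x \<oplus>\<^bsub>R\<^esub> y)) = d (h x) \<oplus>\<^bsub>M\<^esub> d (h y)" using de dh xy by simp
  next
    fix a x assume ax: "a \<in> carrier R" "x \<in> J"
    have "h (a \<otimes>\<^bsub>R\<^esub> x) = a \<odot>\<^bsub>transport e M\<^esub> e (d (h x))" using A ax dh by simp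
    also have "\<dots> = e (a \<odot>\<^bsub>M\<^esub> d (h x))" by (rule tr_smult[OF e]) (use dh ax in auto)
    finally show "d (h (a \<otimes>\<^bsub>R\<^esub> x)) = a \<odot>\<^bsub>M\<^esub> d (h x)" using de dh ax M.smult_closed by simp
  qed
  then obtain v where v: "v \<in> carrier M" "\<forall>x\<in>J. d (h x) = x \<odot>\<^bsub>M\<^esub> v"
    using injective_moduleD[OF M] by blast
  show "\<exists>v\<in>carrier (transport e M). \<forall>x\<in>J. h x = x \<odot>\<^bsub>transport e M\<^esub> v"
  proof (rule bexI[of _ "e v"])
    show "\<forall>x\<in>J. h x = x \<odot>\<^bsub>transport e M\<^esub> e v"
    proof
      fix x assume x: "x \<in> J"
      have "h x = e (d (h x))" using dh x by simp
      also have "\<dots> = e (x \<odot>\<^bsub>M\<^esub> v)" using v x by simp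
      also have "\<dots> = x \<odot>\<^bsub>transport e M\<^esub> e v" using e v by simp
      finally show "h x = x \<odot>\<^bsub>transport e M\<^esub> e v" .
    qed
  qed (use v in simp)
qed

lemma Ass_tr:
  assumes M: "Module.module R M" and e: "inj_on e (carrier M)"
  shows "Ass R (transport e M) = Ass R M"
proof -
  interpret M: Module.module R M by (rule M)
  have "annihilator R (transport e M) (e v) = annihilator R M v" if v: "v \<in> carrier M" for v
    unfolding annihilator_def using v e by (auto simp: inj_on_eq_iff)
  then show ?thesis unfolding Ass_def by auto
qed

lemma hom_tr:
  assumes M: "Module.module R M" and N: "Module.module R N" and e: "inj_on e (carrier M)" and e': "inj_on e' (carrier N)"
    and f: "f \<in> Defs.module_hom R M N"
  shows "(\<lambda>x. e' (f (inv_into (carrier M) e x))) \<in> Defs.module_hom R (transport e M) (transport e' N)"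
proof -
  interpret M: Module.module R M by (rule M)
  have fc: "\<And>x. x \<in> carrier M \<Longrightarrow> f x \<in> carrier N" using f unfolding Defs.module_hom_def by blast
  show ?thesis
    unfolding Defs.module_hom_def mem_Collect_eq
  proof (intro conjI ballI)
    show "(\<lambda>x. e' (f (inv_into (carrier M) e x))) \<in> carrier (transport e M) \<rightarrow> carrier (transport e' N)"
      using e fc by auto
  next
    fix x y assume "x \<in> carrier (transport e M)" "y \<in> carrier (transport e M)"
    then obtain x' y' where xy: "x' \<in> carrier M" "y' \<in> carrier M" "x = e x'" "y = e y'" by auto
    show "e' (f (inv_into (carrier M) e (x \<oplus>\<^bsub>transport e M\<^esub> y))) =
          e' (f (inv_into (carrier M) e x)) \<oplus>\<^bsub>transport e' N\<^esub> e' (f (inv_into (carrier M) e y))"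
      using xy e e' fc f unfolding Defs.module_hom_def by simp
  next
    fix a x assume "a \<in> carrier R" "x \<in> carrier (transport e M)"
    then obtain x' where ax: "a \<in> carrier R" "x' \<in> carrier M" "x = e x'" by auto
    show "e' (f (inv_into (carrier M) e (a \<odot>\<^bsub>transport e M\<^esub> x))) = a \<odot>\<^bsub>transport e' N\<^esub> e' (f (inv_into (carrier M) e x))"
      using ax e e' fc f unfolding Defs.module_hom_def by simp
  qed
qed



definition co :: "'k::field fps fps \<Rightarrow> nat \<Rightarrow> nat \<Rightarrow> 'k" where
  "co b i j = fps_nth (fps_nth b i) j"

abbreviation XB :: "'k::field fps fps" where "XB \<equiv> fps_X"
abbreviation YB :: "'k::field fps fps" where "YB \<equiv> fps_const fps_X"

lemma co_add[simp]: "co (a + b) i j = co a i j + co b i j"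
  by (simp add: co_def)

lemma co_Xpow: "co (b * XB ^ m) i j = (if i < m then 0 else co b (i - m) j)"
  by (simp add: co_def fps_X_power_mult_right_nth)

lemma co_Ypow: "co (b * YB ^ m) i j = (if j < m then 0 else co b i (j - m))"
  by (simp add: co_def fps_const_power fps_X_power_mult_right_nth)

lemma co_X: "co (b * XB) i j = (if i < 1 then 0 else co b (i - 1) j)"
  using co_Xpow[of b 1] by simp

lemma co_Y: "co (b * YB) i j = (if j < 1 then 0 else co b i (j - 1))"
  using co_Ypow[of b 1] by simp

lemma co_const: "co (fps_const (fps_const c) * b) i j = c * co b i j"
  by (simp add: co_def)

lemma co_toB[simp]: "co (toB a) i j = a (i, j)"
  by (simp add: co_def)

lemma co_eq: "(\<And>i j. co a i j = co b i j) \<Longrightarrow> a = b"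
  by (simp add: co_def fps_eq_iff)

lemma toB_X: "toB PS2_X = XB"
  by (rule co_eq) (simp add: PS2_X_def co_def)

lemma toB_Y: "toB PS2_Y = YB"
  by (rule co_eq) (auto simp: PS2_Y_def co_def)

lemma PS2_mult_00: "(a \<otimes>\<^bsub>PS2\<^esub> b) (0, 0) = a (0, 0) * b (0, 0)"
  by (simp add: PS2_mult)

definition M0 :: "'k::field ps set" where "M0 = {a. a (0, 0) = 0}"

lemma ideal_M0: "ideal (M0 :: 'k::field ps set) PS2"
proof -
  interpret R: cring "PS2 :: 'k ps ring" by (rule cring_PS2)
  have neg: "\<ominus>\<^bsub>PS2\<^esub> a = (\<lambda>p. - a p)" for a :: "'k ps"
    by (rule R.minus_equality) (simp_all add: PS2_simps)
  show ?thesis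
  proof (rule idealI)
    show "ring (PS2 :: 'k ps ring)" by (rule R.ring_axioms)
    show "subgroup M0 (add_monoid (PS2 :: 'k ps ring))"
    proof (rule R.add.subgroupI)
      have "(\<lambda>_. 0) \<in> (M0 :: 'k ps set)" by (simp add: M0_def)
      then show "(M0 :: 'k ps set) \<noteq> {}" by blast
    qed (auto simp: M0_def a_inv_def[symmetric] neg PS2_simps)
  qed (auto simp: M0_def PS2_mult_00)
qed

lemma prime_M0: "primeideal (M0 :: 'k::field ps set) PS2"
proof (rule primeidealI[OF ideal_M0 cring_PS2])
  show "carrier PS2 \<noteq> (M0 :: 'k ps set)"
  proof
    assume "carrier PS2 = (M0 :: 'k ps set)"
    then have "(\<lambda>_. 1 :: 'k) \<in> M0" by (metis PS2_carrier UNIV_I)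
    then show False by (simp add: M0_def)
  qed
qed (auto simp: M0_def PS2_mult_00)

lemma M0_decomp:
  assumes "a (0, 0) = 0"
  shows "a = ((\<lambda>(i, j). a (i + 1, j)) \<otimes>\<^bsub>PS2\<^esub> PS2_X) \<oplus>\<^bsub>PS2\<^esub>
             ((\<lambda>(i, j). if i = 0 then a (0, j + 1) else 0) \<otimes>\<^bsub>PS2\<^esub> PS2_Y)"
proof (rule toB_inj, rule co_eq)
  fix i j
  show "co (toB a) i j = co (toB (((\<lambda>(i, j). a (i + 1, j)) \<otimes>\<^bsub>PS2\<^esub> PS2_X) \<oplus>\<^bsub>PS2\<^esub>
             ((\<lambda>(i, j). if i = 0 then a (0, j + 1) else 0) \<otimes>\<^bsub>PS2\<^esub> PS2_Y))) i j"
    using assms by (cases i; cases j) (simp_all add: toB_add toB_mult toB_X toB_Y co_X co_Y)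
qed

lemma PS2_max_eq: "(PS2_max :: 'k::field ps set) = M0"
proof -
  interpret R: cring "PS2 :: 'k ps ring" by (rule cring_PS2)
  have XY: "{PS2_X, PS2_Y} \<subseteq> (M0 :: 'k ps set)" by (simp add: M0_def PS2_X_def PS2_Y_def)
  have sub: "(PS2_max :: 'k ps set) \<subseteq> M0" unfolding PS2_max_def using R.genideal_minimal[OF ideal_M0 XY] by simp
  have idl: "ideal (PS2_max :: 'k ps set) PS2" unfolding PS2_max_def by (rule R.genideal_ideal) simp
  have gen: "{PS2_X, PS2_Y} \<subseteq> (PS2_max :: 'k ps set)" unfolding PS2_max_def by (rule R.genideal_self) simp
  have "a \<in> PS2_max" if "a \<in> M0" for a :: "'k ps"
  proof -
    have a0: "a (0, 0) = 0" using that by (simp add: M0_def)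
    have "((\<lambda>(i, j). a (i + 1, j)) \<otimes>\<^bsub>PS2\<^esub> PS2_X) \<oplus>\<^bsub>PS2\<^esub>
             ((\<lambda>(i, j). if i = 0 then a (0, j + 1) else 0) \<otimes>\<^bsub>PS2\<^esub> PS2_Y) \<in> PS2_max"
      using gen ideal.I_l_closed[OF idl] additive_subgroup.a_closed[OF ideal.axioms(1)[OF idl]] by simp
    then show ?thesis using M0_decomp[of a, OF a0] by simp
  qed
  then show ?thesis using sub by blast
qed

lemma co_XYpow: "co (b * (XB * YB) ^ m) i j = (if i < m \<or> j < m then 0 else co b (i - m) (j - m))"
proof -
  have "b * (XB * YB) ^ m = (b * YB ^ m) * XB ^ m" by (simp only: power_mult_distrib mult_ac)
  then show ?thesis by (simp only: co_Xpow co_Ypow) auto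
qed

lemma XB_nz: "(XB :: 'k::field fps fps) \<noteq> 0" by simp
lemma YB_nz: "(YB :: 'k::field fps fps) \<noteq> 0" by simp
lemma XYB_nz: "(XB * YB :: 'k::field fps fps) \<noteq> 0" by simp

lemma Fract_in_Floc: "Fraction_Field.Fract b (t ^ n) \<in> Floc t"
  unfolding Floc_def by blast

lemma FlocE:
  assumes "q \<in> Floc t"
  obtains b n where "q = Fraction_Field.Fract b (t ^ n)"
  using assms unfolding Floc_def by blast

definition eps :: "'k::field K \<Rightarrow> 'k" where
  "eps q = (if q \<in> Floc XB then
      (let p = SOME p. q = Fraction_Field.Fract (fst p) (XB ^ snd p) in co (fst p) (snd p) 0) else 0)"

lemma eps_Fract: "eps (Fraction_Field.Fract b (XB ^ n)) = co b n 0"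
proof -
  define P where "P p \<longleftrightarrow> Fraction_Field.Fract b (XB ^ n) = Fraction_Field.Fract (fst p) (XB ^ snd p)" for p
  have "P (b, n)" by (simp add: P_def)
  then have "P (SOME p. P p)" by (rule someI)
  define p where "p = (SOME p. P p)"
  have "P p" unfolding p_def by fact
  then have e: "b * XB ^ snd p = fst p * XB ^ n" by (simp add: P_def eq_fract)
  have "co (b * XB ^ snd p) (n + snd p) 0 = co (fst p * XB ^ n) (n + snd p) 0" by (simp only: e)
  then have "co b n 0 = co (fst p) (snd p) 0" by (simp add: co_Xpow)
  moreover have "eps (Fraction_Field.Fract b (XB ^ n)) = co (fst p) (snd p) 0"
    unfolding eps_def p_def P_def Let_def by (simp add: Fract_in_Floc)
  ultimately show ?thesis by simp
qed

lemma sc_Fract: "sc c (Fraction_Field.Fract b s) = Fraction_Field.Fract (fps_const (fps_const c) * b) s"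
  by (simp add: sc_def mult_fract)

lemma eps_carrier: "(eps :: 'k::field K \<Rightarrow> 'k) \<in> carrier (Dual (Floc XB))"
  unfolding Dual_simps mem_Collect_eq klin_def
proof (intro conjI ballI allI impI)
  fix p q :: "'k K" assume "p \<in> Floc XB" "q \<in> Floc XB"
  then obtain b n b' m where pq: "p = Fraction_Field.Fract b (XB ^ n)" "q = Fraction_Field.Fract b' (XB ^ m)"
    by (metis FlocE)
  show "eps (p + q) = eps p + eps q"
    unfolding pq Fract_add_pow[OF XB_nz] eps_Fract by (simp add: co_Xpow)
next
  fix c :: 'k and p :: "'k K" assume "p \<in> Floc XB"
  then obtain b n where pq: "p = Fraction_Field.Fract b (XB ^ n)" by (metis FlocE)
  show "eps (sc c p) = c * eps p"
    unfolding pq sc_Fract eps_Fract by (simp add: co_const)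
next
  fix q :: "'k K" assume "q \<notin> Floc XB" then show "eps q = 0" by (simp add: eps_def)
qed

definition psiX :: "'k::field K \<Rightarrow> 'k" where
  "psiX q = (if q \<in> Floc (XB * YB) then
      (let p = SOME p. q = Fraction_Field.Fract (fst p) ((XB * YB) ^ snd p) in co (fst p * XB) (snd p) (snd p)) else 0)"

lemma psiX_Fract: "psiX (Fraction_Field.Fract b ((XB * YB) ^ n)) = co (b * XB) n n"
proof -
  define P where "P p \<longleftrightarrow> Fraction_Field.Fract b ((XB * YB) ^ n) = Fraction_Field.Fract (fst p) ((XB * YB) ^ snd p)" for p
  have "P (b, n)" by (simp add: P_def)
  then have "P (SOME p. P p)" by (rule someI)
  define p where "p = (SOME p. P p)"
  have "P p" unfolding p_def by fact
  then have e: "b * (XB * YB) ^ snd p = fst p * (XB * YB) ^ n" by (simp add: P_def eq_fract del: power_mult_distrib)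
  have "co (b * XB * (XB * YB) ^ snd p) (n + snd p) (n + snd p) = co (fst p * XB * (XB * YB) ^ n) (n + snd p) (n + snd p)"
  proof -
    have "b * XB * (XB * YB) ^ snd p = (b * (XB * YB) ^ snd p) * XB" by (simp only: mult_ac)
    also have "\<dots> = (fst p * (XB * YB) ^ n) * XB" by (simp only: e)
    also have "\<dots> = fst p * XB * (XB * YB) ^ n" by (simp only: mult_ac)
    finally show ?thesis by (simp only:)
  qed
  then have "co (b * XB) n n = co (fst p * XB) (snd p) (snd p)" by (simp only: co_XYpow) simp
  moreover have "psiX (Fraction_Field.Fract b ((XB * YB) ^ n)) = co (fst p * XB) (snd p) (snd p)"
    unfolding psiX_def p_def P_def Let_def by (simp add: Fract_in_Floc del: power_mult_distrib)
  ultimately show ?thesis by simp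
qed

lemma Fract_X_XY: "Fraction_Field.Fract b (XB ^ n) = Fraction_Field.Fract (b * YB ^ n) ((XB * YB) ^ n)"
  by (simp add: eq_fract power_mult_distrib mult_ac del: fps_const_power)

lemma Fract_Y_XY: "Fraction_Field.Fract b (YB ^ n) = Fraction_Field.Fract (b * XB ^ n) ((XB * YB) ^ n)"
  by (simp add: eq_fract power_mult_distrib mult_ac del: fps_const_power)

lemma Floc_X_sub: "Floc XB \<subseteq> Floc (XB * YB :: 'k::field fps fps)"
  by (auto elim!: FlocE simp: Fract_X_XY Fract_in_Floc)

lemma Floc_Y_sub: "Floc YB \<subseteq> Floc (XB * YB :: 'k::field fps fps)"
  by (auto elim!: FlocE simp: Fract_Y_XY Fract_in_Floc simp del: fps_const_power)

lemma psiX_carrier: "(psiX :: 'k::field K \<Rightarrow> 'k) \<in> carrier (Dual (Floc (XB * YB)))"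
  unfolding Dual_simps mem_Collect_eq klin_def
proof (intro conjI ballI allI impI)
  fix p q :: "'k K" assume "p \<in> Floc (XB * YB)" "q \<in> Floc (XB * YB)"
  then obtain b n b' m where pq: "p = Fraction_Field.Fract b ((XB * YB) ^ n)" "q = Fraction_Field.Fract b' ((XB * YB) ^ m)"
    by (metis FlocE)
  have e: "(b * (XB * YB) ^ m + b' * (XB * YB) ^ n) * XB = (b * XB) * (XB * YB) ^ m + (b' * XB) * (XB * YB) ^ n"
    by (simp only: distrib_right distrib_left mult_ac)
  show "psiX (p + q) = psiX p + psiX q"
    unfolding pq Fract_add_pow[OF XYB_nz] psiX_Fract e co_add co_XYpow by simp
next
  fix c :: 'k and p :: "'k K" assume "p \<in> Floc (XB * YB)"
  then obtain b n where pq: "p = Fraction_Field.Fract b ((XB * YB) ^ n)" by (metis FlocE)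
  have e: "fps_const (fps_const c) * b * XB = fps_const (fps_const c) * (b * XB)" by (simp only: mult.assoc)
  show "psiX (sc c p) = c * psiX p"
    unfolding pq sc_Fract psiX_Fract e co_const ..
next
  fix q :: "'k K" assume "q \<notin> Floc (XB * YB)" then show "psiX q = 0" by (simp add: psiX_def)
qed

section \<open>Torsion and associated primes\<close>

lemma Ass_ok:
  fixes M :: "('k::field ps, 'b) module"
  assumes mod: "Module.module PS2 M"
    and tf: "\<And>v. v \<in> carrier M \<Longrightarrow> PS2_X \<odot>\<^bsub>M\<^esub> v = \<zero>\<^bsub>M\<^esub> \<Longrightarrow> PS2_Y \<odot>\<^bsub>M\<^esub> v = \<zero>\<^bsub>M\<^esub> \<Longrightarrow> v = \<zero>\<^bsub>M\<^esub>"
  shows "Ass PS2 M \<subseteq> Spec PS2 - {PS2_max}"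
proof
  fix P assume "P \<in> Ass PS2 M"
  then obtain v where P: "P \<in> Spec PS2" "v \<in> carrier M" "P = annihilator PS2 M v"
    unfolding Ass_def by blast
  have "P \<noteq> PS2_max"
  proof
    assume eq: "P = PS2_max"
    have "PS2_X \<in> P" "PS2_Y \<in> P" unfolding eq PS2_max_eq by (simp_all add: M0_def PS2_X_def PS2_Y_def)
    then have "PS2_X \<odot>\<^bsub>M\<^esub> v = \<zero>\<^bsub>M\<^esub>" "PS2_Y \<odot>\<^bsub>M\<^esub> v = \<zero>\<^bsub>M\<^esub>" using P(3) by (simp_all add: annihilator_def)
    then have "v = \<zero>\<^bsub>M\<^esub>" using tf P(2) by blast
    then have "P = carrier PS2" using P(3) module.smult_r_null[OF mod] by (auto simp: annihilator_def)
    moreover have "carrier PS2 \<noteq> (PS2_max :: 'k ps set)"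
      using primeideal.I_notcarr[OF prime_M0] PS2_max_eq by metis
    ultimately show False using eq by simp
  qed
  then show "P \<in> Spec PS2 - {PS2_max}" using P by simp
qed

lemma Dual_tf:
  fixes t :: "'k::field fps fps"
  assumes t: "t \<noteq> 0" and Ts: "toB T * s = t" and \<phi>: "\<phi> \<in> carrier (Dual (Floc t))"
    and z: "T \<odot>\<^bsub>Dual (Floc t)\<^esub> \<phi> = \<zero>\<^bsub>Dual (Floc t)\<^esub>"
  shows "\<phi> = \<zero>\<^bsub>Dual (Floc t)\<^esub>"
proof
  fix q
  show "\<phi> q = \<zero>\<^bsub>Dual (Floc t)\<^esub> q"
  proof (cases "q \<in> Floc t")
    case True
    then obtain b n where q: "q = Fraction_Field.Fract b (t ^ n)" by (rule FlocE)
    have "q = emb T * Fraction_Field.Fract (b * s) (t ^ Suc n)"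
      unfolding q emb_Fract using t by (simp add: eq_fract ac_simps flip: Ts)
    moreover have "(T \<odot>\<^bsub>Dual (Floc t)\<^esub> \<phi>) (Fraction_Field.Fract (b * s) (t ^ Suc n)) = 0"
      using z by simp
    ultimately show ?thesis using Fract_in_Floc[of "b * s" t "Suc n"] by simp
  next
    case False
    then show ?thesis using \<phi> by simp
  qed
qed

lemma tf_D0: "\<phi> \<in> carrier (Dual (Floc (XB * YB))) \<Longrightarrow> PS2_X \<odot>\<^bsub>Dual (Floc (XB * YB))\<^esub> \<phi> = \<zero>\<^bsub>Dual (Floc (XB * YB))\<^esub>
   \<Longrightarrow> \<phi> = \<zero>\<^bsub>Dual (Floc (XB * YB :: 'k::field fps fps))\<^esub>"
  by (rule Dual_tf[OF XYB_nz, of PS2_X YB]) (simp_all add: toB_X)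

lemma tf_DX: "\<phi> \<in> carrier (Dual (Floc XB)) \<Longrightarrow> PS2_X \<odot>\<^bsub>Dual (Floc XB)\<^esub> \<phi> = \<zero>\<^bsub>Dual (Floc XB)\<^esub>
   \<Longrightarrow> \<phi> = \<zero>\<^bsub>Dual (Floc (XB :: 'k::field fps fps))\<^esub>"
  by (rule Dual_tf[OF XB_nz, of PS2_X 1]) (simp_all add: toB_X)

lemma tf_DY: "\<phi> \<in> carrier (Dual (Floc YB)) \<Longrightarrow> PS2_Y \<odot>\<^bsub>Dual (Floc YB)\<^esub> \<phi> = \<zero>\<^bsub>Dual (Floc YB)\<^esub>
   \<Longrightarrow> \<phi> = \<zero>\<^bsub>Dual (Floc (YB :: 'k::field fps fps))\<^esub>"
  by (rule Dual_tf[OF YB_nz, of PS2_Y 1]) (simp_all add: toB_Y)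

abbreviation D0 :: "('k::field ps, 'k K \<Rightarrow> 'k) module" where "D0 \<equiv> Dual (Floc (XB * YB))"
abbreviation P1 :: "('k::field ps, ('k K \<Rightarrow> 'k) \<times> ('k K \<Rightarrow> 'k)) module" where
  "P1 \<equiv> prodM PS2 (Dual (Floc XB)) (Dual (Floc YB))"

definition fmap :: "('k::field K \<Rightarrow> 'k) \<Rightarrow> ('k K \<Rightarrow> 'k) \<times> ('k K \<Rightarrow> 'k)" where
  "fmap \<phi> = ((\<lambda>q. if q \<in> Floc XB then \<phi> q else 0), (\<lambda>q. if q \<in> Floc YB then - \<phi> q else 0))"

lemma FS_X: "Fsub (Floc (XB :: 'k::field fps fps))" by (rule Fsub_Floc[OF XB_nz])
lemma FS_Y: "Fsub (Floc (YB :: 'k::field fps fps))" by (rule Fsub_Floc[OF YB_nz])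

lemma res_carrier:
  fixes t u :: "'k::field fps fps"
  assumes \<phi>: "klin (Floc u) \<phi>" and sub: "Floc t \<subseteq> Floc u" and FS: "Fsub (Floc t)"
  shows "(\<lambda>q. if q \<in> Floc t then \<phi> q else 0) \<in> carrier (Dual (Floc t))"
    and "(\<lambda>q. if q \<in> Floc t then - \<phi> q else 0) \<in> carrier (Dual (Floc t))"
proof -
  have add: "p + q \<in> Floc t" if "p \<in> Floc t" "q \<in> Floc t" for p q using FS that unfolding Fsub_def by blast
  have scc: "sc c p \<in> Floc t" if "p \<in> Floc t" for c p using FS that unfolding Fsub_def sc_emb by blast
  have pa: "\<phi> (p + q) = \<phi> p + \<phi> q" if "p \<in> Floc t" "q \<in> Floc t" for p q
    using \<phi> sub that unfolding klin_def by blast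
  have ps: "\<phi> (sc c p) = c * \<phi> p" if "p \<in> Floc t" for c p
    using \<phi> sub that unfolding klin_def by blast
  show "(\<lambda>q. if q \<in> Floc t then \<phi> q else 0) \<in> carrier (Dual (Floc t))"
    unfolding Dual_simps mem_Collect_eq klin_def using add scc pa ps by simp
  show "(\<lambda>q. if q \<in> Floc t then - \<phi> q else 0) \<in> carrier (Dual (Floc t))"
    unfolding Dual_simps mem_Collect_eq klin_def using add scc pa ps by simp
qed

lemma fmap_carrier:
  assumes \<phi>: "\<phi> \<in> carrier (D0 :: ('k::field ps, 'k K \<Rightarrow> 'k) module)"
  shows "fmap \<phi> \<in> carrier P1"
proof -
  have kl: "klin (Floc (XB * YB)) \<phi>" using \<phi> by simp
  show ?thesis using res_carrier(1)[OF kl Floc_X_sub FS_X] res_carrier(2)[OF kl Floc_Y_sub FS_Y]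
    by (simp add: fmap_def)
qed

lemma fmap_hom: "fmap \<in> Defs.module_hom PS2 (D0 :: ('k::field ps, 'k K \<Rightarrow> 'k) module) P1"
  unfolding Defs.module_hom_def mem_Collect_eq
proof (intro conjI ballI)
  show "fmap \<in> carrier D0 \<rightarrow> carrier (P1 :: ('k ps, _) module)" using fmap_carrier by blast
next
  fix x y :: "'k K \<Rightarrow> 'k"
  show "fmap (x \<oplus>\<^bsub>D0\<^esub> y) = fmap x \<oplus>\<^bsub>P1\<^esub> fmap y"
    by (auto simp: fmap_def)
next
  fix a :: "'k ps" and x :: "'k K \<Rightarrow> 'k"
  have sX: "emb a * q \<in> Floc XB" if "q \<in> Floc XB" for q using FS_X that unfolding Fsub_def by blast
  have sY: "emb a * q \<in> Floc YB" if "q \<in> Floc YB" for q using FS_Y that unfolding Fsub_def by blast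
  show "fmap (a \<odot>\<^bsub>D0\<^esub> x) = a \<odot>\<^bsub>P1\<^esub> fmap x"
    using sX sY Floc_X_sub Floc_Y_sub by (auto simp: fmap_def fun_eq_iff)
qed

definition wel :: "('k::field K \<Rightarrow> 'k) \<times> ('k K \<Rightarrow> 'k)" where "wel = (eps, (\<lambda>q. 0))"

lemma wel_carrier: "wel \<in> carrier (P1 :: ('k::field ps, _) module)"
  using eps_carrier by (simp add: wel_def klin_def)

lemma zero_D0: "(\<lambda>q. 0) \<in> carrier (D0 :: ('k::field ps, 'k K \<Rightarrow> 'k) module)"
  by (simp add: klin_def)

lemma one_Fract: "Fraction_Field.Fract 1 (t ^ 0) = (1 :: 'k::field K)"
  by (simp add: One_fract_def)

lemma claim1:
  assumes a: "a (0, 0) \<noteq> 0"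
  shows "a \<odot>\<^bsub>P1\<^esub> wel \<notin> fmap ` carrier (D0 :: ('k::field ps, 'k K \<Rightarrow> 'k) module)"
proof
  assume "a \<odot>\<^bsub>P1\<^esub> wel \<in> fmap ` carrier (D0 :: ('k ps, 'k K \<Rightarrow> 'k) module)"
  then obtain \<phi> where eq: "a \<odot>\<^bsub>P1\<^esub> wel = fmap \<phi>" by blast
  have 1: "(1 :: 'k K) \<in> Floc XB" "(1 :: 'k K) \<in> Floc YB"
    using Fract_in_Floc[of 1 XB 0] Fract_in_Floc[of 1 YB 0] unfolding one_Fract by simp_all
  have e1: "eps (emb a * 1) = \<phi> 1" using fun_cong[OF arg_cong[OF eq, of fst], of 1] 1
    by (simp add: wel_def fmap_def)
  have e2: "0 = - \<phi> (1 :: 'k K)" using fun_cong[OF arg_cong[OF eq, of snd], of 1] 1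
    by (simp add: wel_def fmap_def)
  have "emb a * 1 = Fraction_Field.Fract (toB a) (XB ^ 0)" by (simp add: emb_def)
  then have "eps (emb a * 1) = a (0, 0)" by (simp only: eps_Fract co_toB)
  then show False using e1 e2 a by simp
qed

lemma claim2: "PS2_X \<odot>\<^bsub>P1\<^esub> wel = fmap (psiX :: 'k::field K \<Rightarrow> 'k)"
proof -
  have A: "(\<lambda>q. if q \<in> Floc XB then eps (emb PS2_X * q) else 0) = (\<lambda>q. if q \<in> Floc XB then psiX q else (0 :: 'k))"
  proof
    fix q :: "'k K"
    show "(if q \<in> Floc XB then eps (emb PS2_X * q) else 0) = (if q \<in> Floc XB then psiX q else 0)"
    proof (cases "q \<in> Floc XB")
      case True
      then obtain b n where q: "q = Fraction_Field.Fract b (XB ^ n)" by (rule FlocE)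
      have "eps (emb PS2_X * q) = co (XB * b) n 0" unfolding q emb_Fract toB_X eps_Fract ..
      also have "\<dots> = co (b * XB * YB ^ n) n n"
      proof -
        have "co (b * XB * YB ^ n) n n = co (b * XB) n 0" by (simp only: co_Ypow) simp
        then show ?thesis by (simp only: mult.commute)
      qed
      also have "\<dots> = psiX q" unfolding q Fract_X_XY psiX_Fract by (simp only: mult_ac)
      finally show ?thesis using True by simp
    qed simp
  qed
  have B: "(\<lambda>q. if q \<in> Floc YB then 0 else 0) = (\<lambda>q. if q \<in> Floc YB then - psiX q else (0 :: 'k))"
  proof
    fix q :: "'k K"
    show "(if q \<in> Floc YB then 0 else 0) = (if q \<in> Floc YB then - psiX q else (0 :: 'k))"
    proof (cases "q \<in> Floc YB")
      case True
      then obtain b n where q: "q = Fraction_Field.Fract b (YB ^ n)" by (rule FlocE)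
      have "psiX q = co (b * XB ^ n * XB) n n" unfolding q Fract_Y_XY psiX_Fract ..
      also have "\<dots> = 0"
      proof -
        have "b * XB ^ n * XB = b * XB ^ Suc n" by (simp only: power_Suc mult_ac)
        then show ?thesis by (simp only: co_Xpow) simp
      qed
      finally show ?thesis using True by simp
    qed simp
  qed
  show ?thesis unfolding wel_def fmap_def prodM_simps fst_conv snd_conv Dual_simps by (simp only: A B)
qed

lemma claim3: "PS2_Y \<odot>\<^bsub>P1\<^esub> wel = fmap (\<lambda>q. 0 :: 'k::field)"
proof -
  have A: "(\<lambda>q. if q \<in> Floc XB then eps (emb PS2_Y * q) else 0) = (\<lambda>q. (0 :: 'k))"
  proof
    fix q :: "'k K"
    show "(if q \<in> Floc XB then eps (emb PS2_Y * q) else 0) = 0"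
    proof (cases "q \<in> Floc XB")
      case True
      then obtain b n where q: "q = Fraction_Field.Fract b (XB ^ n)" by (rule FlocE)
      have "eps (emb PS2_Y * q) = co (YB * b) n 0" unfolding q emb_Fract toB_Y eps_Fract ..
      also have "\<dots> = 0" using co_Y[of b n 0] by (simp add: mult.commute)
      finally show ?thesis using True by simp
    qed simp
  qed
  show ?thesis using A by (simp add: wel_def fmap_def fun_eq_iff)
qed

section \<open>Encoding into the required carrier type\<close>

definition pk :: "'k::field ps \<Rightarrow> 'k \<Rightarrow> 'k ps" where
  "pk a c = (\<lambda>(i, j). if i = 0 then (if j = 0 then c else 0) else a (i - 1, j))"

lemma pk_inj: "pk a c = pk a' c' \<Longrightarrow> a = a' \<and> c = c'"
proof
  assume e: "pk a c = pk a' c'"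
  show "a = a'"
  proof
    fix p :: "nat \<times> nat"
    obtain i j where p: "p = (i, j)" by (cases p)
    have "pk a c (Suc i, j) = pk a' c' (Suc i, j)" using e by simp
    then show "a p = a' p" unfolding p pk_def by simp
  qed
  have "pk a c (0, 0) = pk a' c' (0, 0)" using e by simp
  then show "c = c'" unfolding pk_def by simp
qed

definition genc :: "('k::field ps \<Rightarrow> 'k) \<Rightarrow> 'k ps set" where
  "genc g = range (\<lambda>a. pk a (g a))"

lemma genc_inj: "genc g = genc g' \<Longrightarrow> g = g'"
proof
  fix a assume e: "genc g = genc g'"
  have "pk a (g a) \<in> genc g'" using e unfolding genc_def by blast
  then obtain a' where "pk a (g a) = pk a' (g' a')" unfolding genc_def by blast
  then show "g a = g' a" using pk_inj by metis
qed

definition encF :: "'k::field fps fps \<Rightarrow> ('k K \<Rightarrow> 'k) \<Rightarrow> (nat \<Rightarrow> 'k ps set)" where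
  "encF t \<phi> = (\<lambda>n. genc (\<lambda>a. \<phi> (Fraction_Field.Fract (toB a) (t ^ n))))"

lemma encF_inj: "inj_on (encF t) (carrier (Dual (Floc t)))"
proof
  fix \<phi> \<psi> assume \<phi>: "\<phi> \<in> carrier (Dual (Floc t))" and \<psi>: "\<psi> \<in> carrier (Dual (Floc t))"
    and e: "encF t \<phi> = encF t \<psi>"
  have v: "\<phi> (Fraction_Field.Fract (toB a) (t ^ n)) = \<psi> (Fraction_Field.Fract (toB a) (t ^ n))" for a n
  proof -
    have "genc (\<lambda>a. \<phi> (Fraction_Field.Fract (toB a) (t ^ n))) = genc (\<lambda>a. \<psi> (Fraction_Field.Fract (toB a) (t ^ n)))"
      using fun_cong[OF e, of n] unfolding encF_def .
    from genc_inj[OF this] show ?thesis by (rule fun_cong)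
  qed
  show "\<phi> = \<psi>"
  proof
    fix q
    show "\<phi> q = \<psi> q"
    proof (cases "q \<in> Floc t")
      case True
      then obtain b n where q: "q = Fraction_Field.Fract b (t ^ n)" by (rule FlocE)
      show ?thesis using v[of "fromB b" n] unfolding q by simp
    next
      case False
      then show ?thesis using \<phi> \<psi> by simp
    qed
  qed
qed

definition enc1 :: "('k::field K \<Rightarrow> 'k) \<times> ('k K \<Rightarrow> 'k) \<Rightarrow> (nat \<Rightarrow> 'k ps set)" where
  "enc1 p = (\<lambda>n. if even n then encF XB (fst p) (n div 2) else encF YB (snd p) (n div 2))"

lemma enc1_inj: "inj_on enc1 (carrier (P1 :: ('k::field ps, _) module))"
proof
  fix p p' :: "('k K \<Rightarrow> 'k) \<times> ('k K \<Rightarrow> 'k)"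
  assume p: "p \<in> carrier P1" and p': "p' \<in> carrier P1" and e: "enc1 p = enc1 p'"
  have "encF XB (fst p) = encF XB (fst p')"
  proof
    fix n show "encF XB (fst p) n = encF XB (fst p') n"
      using fun_cong[OF e, of "2 * n"] unfolding enc1_def by simp
  qed
  then have 1: "fst p = fst p'" using encF_inj[of XB] p p' unfolding inj_on_def by (auto simp: mem_Times_iff)
  have "encF YB (snd p) = encF YB (snd p')"
  proof
    fix n show "encF YB (snd p) n = encF YB (snd p') n"
      using fun_cong[OF e, of "2 * n + 1"] unfolding enc1_def by simp
  qed
  then have 2: "snd p = snd p'" using encF_inj[of YB] p p' unfolding inj_on_def by (auto simp: mem_Times_iff)
  show "p = p'" using 1 2 by (simp add: prod_eq_iff)
qed

section \<open>The obstruction\<close>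

lemma no_completion:
  fixes I0 :: "('k::field ps, 'a) module" and I1 :: "('k ps, 'b) module" and I2 :: "('k ps, 'c) module"
  assumes I1: "Module.module PS2 I1" and I2: "Inj_Phi PS2 (Spec PS2 - {PS2_max}) I2"
    and g: "g \<in> Defs.module_hom PS2 I1 I2" and ex: "exact_at I0 I1 I2 f g" and w: "w \<in> carrier I1"
    and c1: "\<And>a. a (0, 0) \<noteq> 0 \<Longrightarrow> a \<odot>\<^bsub>I1\<^esub> w \<notin> f ` carrier I0"
    and c2: "PS2_X \<odot>\<^bsub>I1\<^esub> w \<in> f ` carrier I0" and c3: "PS2_Y \<odot>\<^bsub>I1\<^esub> w \<in> f ` carrier I0"
  shows False
proof -
  have I2m: "Module.module PS2 I2" using I2 unfolding Inj_Phi_def injective_module_def by blast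
  interpret M1: Module.module PS2 I1 by (rule I1)
  interpret M2: Module.module PS2 I2 by (rule I2m)
  have gc: "\<And>x. x \<in> carrier I1 \<Longrightarrow> g x \<in> carrier I2" using g unfolding Defs.module_hom_def by blast
  have ga: "\<And>x y. x \<in> carrier I1 \<Longrightarrow> y \<in> carrier I1 \<Longrightarrow> g (x \<oplus>\<^bsub>I1\<^esub> y) = g x \<oplus>\<^bsub>I2\<^esub> g y"
    using g unfolding Defs.module_hom_def by blast
  have gs: "\<And>a x. x \<in> carrier I1 \<Longrightarrow> g (a \<odot>\<^bsub>I1\<^esub> x) = a \<odot>\<^bsub>I2\<^esub> g x"
    using g unfolding Defs.module_hom_def by simp
  have ker: "\<And>y. y \<in> carrier I1 \<Longrightarrow> y \<in> f ` carrier I0 \<longleftrightarrow> g y = \<zero>\<^bsub>I2\<^esub>"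
    using ex unfolding exact_at_def by blast
  have wc: "\<And>a. a \<odot>\<^bsub>I1\<^esub> w \<in> carrier I1" using w by simp
  have ann: "annihilator PS2 I2 (g w) = PS2_max"
  proof -
    have "a \<odot>\<^bsub>I2\<^esub> g w = \<zero>\<^bsub>I2\<^esub> \<longleftrightarrow> a (0, 0) = 0" for a
    proof
      assume "a \<odot>\<^bsub>I2\<^esub> g w = \<zero>\<^bsub>I2\<^esub>"
      then have "a \<odot>\<^bsub>I1\<^esub> w \<in> f ` carrier I0" using ker[OF wc] gs[OF w] by simp
      then show "a (0, 0) = 0" using c1 by blast
    next
      assume a0: "a (0, 0) = 0"
      define b :: "'k ps" where "b = (\<lambda>(i, j). a (i + 1, j))"
      define c :: "'k ps" where "c = (\<lambda>(i, j). if i = 0 then a (0, j + 1) else (0::'k))"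
      have a: "a = (b \<otimes>\<^bsub>PS2\<^esub> PS2_X) \<oplus>\<^bsub>PS2\<^esub> (c \<otimes>\<^bsub>PS2\<^esub> PS2_Y)"
        unfolding b_def c_def by (rule M0_decomp[of a, OF a0])
      have Xw: "g (PS2_X \<odot>\<^bsub>I1\<^esub> w) = \<zero>\<^bsub>I2\<^esub>" using ker[OF wc] c2 by blast
      have Yw: "g (PS2_Y \<odot>\<^bsub>I1\<^esub> w) = \<zero>\<^bsub>I2\<^esub>" using ker[OF wc] c3 by blast
      have "a \<odot>\<^bsub>I1\<^esub> w = b \<odot>\<^bsub>I1\<^esub> (PS2_X \<odot>\<^bsub>I1\<^esub> w) \<oplus>\<^bsub>I1\<^esub> c \<odot>\<^bsub>I1\<^esub> (PS2_Y \<odot>\<^bsub>I1\<^esub> w)"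
        by (subst a) (simp add: w M1.smult_l_distr M1.smult_assoc1)
      then have "g (a \<odot>\<^bsub>I1\<^esub> w) = b \<odot>\<^bsub>I2\<^esub> g (PS2_X \<odot>\<^bsub>I1\<^esub> w) \<oplus>\<^bsub>I2\<^esub> c \<odot>\<^bsub>I2\<^esub> g (PS2_Y \<odot>\<^bsub>I1\<^esub> w)"
        using ga gs wc by simp
      also have "\<dots> = \<zero>\<^bsub>I2\<^esub>" unfolding Xw Yw by simp
      finally show "a \<odot>\<^bsub>I2\<^esub> g w = \<zero>\<^bsub>I2\<^esub>" using gs[OF w] by simp
    qed
    then show ?thesis unfolding annihilator_def PS2_max_eq M0_def by auto
  qed
  have "PS2_max \<in> Spec (PS2 :: 'k ps ring)" unfolding Spec_def PS2_max_eq using prime_M0 by simp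
  then have "PS2_max \<in> Ass PS2 I2" unfolding Ass_def using ann gc[OF w] by force
  then show False using I2 unfolding Inj_Phi_def by blast
qed

lemma tf_P1:
  assumes v: "v \<in> carrier (P1 :: ('k::field ps, _) module)"
    and x: "PS2_X \<odot>\<^bsub>P1\<^esub> v = \<zero>\<^bsub>P1\<^esub>" and y: "PS2_Y \<odot>\<^bsub>P1\<^esub> v = \<zero>\<^bsub>P1\<^esub>"
  shows "v = \<zero>\<^bsub>P1\<^esub>"
proof -
  have 1: "fst v = \<zero>\<^bsub>Dual (Floc XB)\<^esub>"
    by (rule tf_DX) (use v x in \<open>simp_all add: mem_Times_iff\<close>)
  have 2: "snd v = \<zero>\<^bsub>Dual (Floc YB)\<^esub>"
    by (rule tf_DY) (use v y in \<open>simp_all add: mem_Times_iff\<close>)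
  show ?thesis using 1 2 by (simp add: prod_eq_iff)
qed

theorem mainTheorem7:
  "\<not> coherent_on TYPE(nat \<Rightarrow> (nat \<times> nat \<Rightarrow> 'k::field) set) TYPE('c)
       (PS2 :: (nat \<times> nat \<Rightarrow> 'k) ring) (Spec (PS2 :: (nat \<times> nat \<Rightarrow> 'k) ring) - {PS2_max})"
proof
  assume coh: "coherent_on TYPE(nat \<Rightarrow> (nat \<times> nat \<Rightarrow> 'k::field) set) TYPE('c)
       (PS2 :: (nat \<times> nat \<Rightarrow> 'k) ring) (Spec (PS2 :: (nat \<times> nat \<Rightarrow> 'k) ring) - {PS2_max})"
  define e0 where "e0 = (encF (XB * YB) :: ('k K \<Rightarrow> 'k) \<Rightarrow> nat \<Rightarrow> 'k ps set)"
  define T0 where "T0 = transport e0 (D0 :: ('k ps, 'k K \<Rightarrow> 'k) module)"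
  define T1 where "T1 = transport enc1 (P1 :: ('k ps, _) module)"
  define f' where "f' = (\<lambda>x. enc1 (fmap (inv_into (carrier (D0 :: ('k ps, 'k K \<Rightarrow> 'k) module)) e0 x)))"
  have mD0: "Module.module PS2 (D0 :: ('k ps, 'k K \<Rightarrow> 'k) module)"
    by (rule module_Dual[OF Fsub_Floc[OF XYB_nz]])
  have iD0: "injective_module PS2 (D0 :: ('k ps, 'k K \<Rightarrow> 'k) module)" by (rule inj_Dual[OF XYB_nz])
  have iP1: "injective_module PS2 (P1 :: ('k ps, _) module)"
    by (rule inj_prodM[OF inj_Dual[OF XB_nz] inj_Dual[OF YB_nz]])
  have mP1: "Module.module PS2 (P1 :: ('k ps, _) module)"
    using iP1 unfolding injective_module_def by (rule conjunct1)
  have ie0: "inj_on e0 (carrier (D0 :: ('k ps, 'k K \<Rightarrow> 'k) module))" unfolding e0_def by (rule encF_inj)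
  have ie1: "inj_on enc1 (carrier (P1 :: ('k ps, _) module))" by (rule enc1_inj)
  have I0: "Inj_Phi PS2 (Spec PS2 - {PS2_max}) T0"
    unfolding Inj_Phi_def T0_def
    using inj_tr[OF iD0 ie0] Ass_tr[OF mD0 ie0] Ass_ok[OF mD0 tf_D0] by simp
  have I1: "Inj_Phi PS2 (Spec PS2 - {PS2_max}) T1"
    unfolding Inj_Phi_def T1_def
    using inj_tr[OF iP1 ie1] Ass_tr[OF mP1 ie1] Ass_ok[OF mP1 tf_P1] by simp
  have hom: "f' \<in> Defs.module_hom PS2 T0 T1"
    unfolding f'_def T0_def T1_def by (rule hom_tr[OF mD0 mP1 ie0 ie1 fmap_hom])
  have "\<exists>(I2 :: ('k ps, 'c) module) g. Inj_Phi PS2 (Spec PS2 - {PS2_max}) I2 \<and> g \<in> Defs.module_hom PS2 T1 I2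
            \<and> exact_at T0 T1 I2 f' g"
    using coh[unfolded coherent_on_def, rule_format, OF conjI[OF I0 conjI[OF I1 hom]]] .
  then obtain I2 :: "('k ps, 'c) module" and g where I2: "Inj_Phi PS2 (Spec PS2 - {PS2_max}) I2"
    and g: "g \<in> Defs.module_hom PS2 T1 I2" and ex: "exact_at T0 T1 I2 f' g" by blast
  have mT1: "Module.module PS2 T1" unfolding T1_def by (rule module_tr[OF mP1 ie1])
  have imf: "f' ` carrier T0 = enc1 ` (fmap ` carrier D0)"
    unfolding f'_def T0_def using ie0 by (auto simp: image_image)
  have fc: "fmap ` carrier D0 \<subseteq> carrier (P1 :: ('k ps, _) module)" using fmap_carrier by blast
  interpret MP1: Module.module PS2 "P1 :: ('k ps, _) module" by (rule mP1)
  have mem: "enc1 y \<in> f' ` carrier T0 \<longleftrightarrow> y \<in> fmap ` carrier D0" if "y \<in> carrier P1" for y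
    unfolding imf using inj_on_image_mem_iff[OF ie1 that fc] .
  have smw: "a \<odot>\<^bsub>T1\<^esub> enc1 wel = enc1 (a \<odot>\<^bsub>P1\<^esub> wel)" for a
    unfolding T1_def using tr_smult[OF ie1 wel_carrier] .
  have wc: "a \<odot>\<^bsub>P1\<^esub> wel \<in> carrier (P1 :: ('k ps, _) module)" for a
    using MP1.smult_closed[OF _ wel_carrier] by simp
  show False
  proof (rule no_completion[OF mT1 I2 g ex])
    show "enc1 wel \<in> carrier T1" unfolding T1_def tr_carrier using wel_carrier by (rule imageI)
    fix a :: "'k ps" assume "a (0, 0) \<noteq> 0"
    then show "a \<odot>\<^bsub>T1\<^esub> enc1 wel \<notin> f' ` carrier T0"
      unfolding smw mem[OF wc] using claim1 by blast
  next
    show "PS2_X \<odot>\<^bsub>T1\<^esub> enc1 wel \<in> f' ` carrier T0"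
      unfolding smw mem[OF wc] unfolding claim2 using psiX_carrier by blast
  next
    show "PS2_Y \<odot>\<^bsub>T1\<^esub> enc1 wel \<in> f' ` carrier T0"
      unfolding smw mem[OF wc] unfolding claim3 using zero_D0 by blast
  qed
qed


end
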